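(* Let $(\Omega,\mathcal{F},\mathbb{P})$ be a nonatomic probability space and let $(\mathcal{X},\mathcal{X}^\ast)$ be a pair of law-invariant vector subspaces of $L^1$, each containing $L^\infty$, such that $XY\in L^1$ for all $X\in\mathcal{X}$ and $Y\in\mathcal{X}^\ast$. For $Z\in\mathcal{X}$ let $\mathcal{L}_Z=\{Z'\in\mathcal{X}: Z'\sim Z\}$. For every nonconstant $Z\in\mathcal{X}$: (i) if $\mathbb{E}_{\mathbb{P}}[Z]\neq0$, then $\mathrm{span}(\mathcal{L}_Z)$ is $\sigma(\mathcal{X},\mathcal{X}^\ast)$-dense in $\mathcal{X}$; (ii) if $\mathbb{E}_{\mathbb{P}}[Z]=0$, then the $\sigma(\mathcal{X},\mathcal{X}^\ast)$-closure of $\mathrm{span}(\mathcal{L}_Z)$ equals $\{X\in\mathcal{X}:\mathbb{E}_{\mathbb{P}}[X]=0\}$.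
   Context: $L^0$ denotes real random variables modulo a.s. equality; "nonconstant" means not a.s. constant. $Z'\sim Z$ means $Z'$ and $Z$ have the same law under $\mathbb{P}$. A set $\mathcal{S}\subset L^0$ is law invariant if $X\in\mathcal{S}$ whenever $X\in L^0$ and $X\sim Y$ for some $Y\in\mathcal{S}$. $\sigma(\mathcal{X},\mathcal{X}^\ast)$ is the weakest linear topology on $\mathcal{X}$ for which $X\mapsto\mathbb{E}_{\mathbb{P}}[XY]$ is continuous for every $Y\in\mathcal{X}^\ast$. $\mathrm{span}$ denotes the linear span. *)

theory Defs
  imports "HOL-Probability.Probability"
begin

text \<open>Real random variables are represented as Borel-measurable functions on the
  sample space; equality almost surely is handled through law invariance.\<close>

definition nonatomic :: "'a measure \<Rightarrow> bool" where
  "nonatomic M \<longleftrightarrow> (\<forall>A\<in>sets M. 0 < measure M A \<longrightarrow>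
      (\<exists>B\<in>sets M. B \<subseteq> A \<and> 0 < measure M B \<and> measure M B < measure M A))"

definition law_invariant :: "'a measure \<Rightarrow> ('a \<Rightarrow> real) set \<Rightarrow> bool" where
  "law_invariant M S \<longleftrightarrow> (\<forall>X Y. X \<in> borel_measurable M \<longrightarrow> Y \<in> S \<longrightarrow>
      distr M borel X = distr M borel Y \<longrightarrow> X \<in> S)"

definition fun_subspace :: "('a \<Rightarrow> real) set \<Rightarrow> bool" where
  "fun_subspace S \<longleftrightarrow> (\<lambda>_. 0) \<in> S \<and> (\<forall>X\<in>S. \<forall>Y\<in>S. (\<lambda>\<omega>. X \<omega> + Y \<omega>) \<in> S)
      \<and> (\<forall>c. \<forall>X\<in>S. (\<lambda>\<omega>. c * X \<omega>) \<in> S)"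

definition admissible_space :: "'a measure \<Rightarrow> ('a \<Rightarrow> real) set \<Rightarrow> bool" where
  "admissible_space M S \<longleftrightarrow> fun_subspace S \<and> law_invariant M S
     \<and> (\<forall>X\<in>S. integrable M X)
     \<and> (\<forall>X. X \<in> borel_measurable M \<longrightarrow> (\<exists>C. AE \<omega> in M. \<bar>X \<omega>\<bar> \<le> C) \<longrightarrow> X \<in> S)"

definition fun_span :: "('a \<Rightarrow> real) set \<Rightarrow> ('a \<Rightarrow> real) set" where
  "fun_span S = {f. \<exists>(n::nat) c g. (\<forall>i<n. g i \<in> S) \<and> f = (\<lambda>\<omega>. \<Sum>i<n. c i * g i \<omega>)}"

definition weak_top :: "'a measure \<Rightarrow> ('a \<Rightarrow> real) set \<Rightarrow> ('a \<Rightarrow> real) set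
    \<Rightarrow> ('a \<Rightarrow> real) topology" where
  "weak_top M S Sd = topology_generated_by
     {{X\<in>S. (\<integral>\<omega>. X \<omega> * Y \<omega> \<partial>M) \<in> U} | Y U. Y \<in> Sd \<and> open U}"

definition law_class :: "'a measure \<Rightarrow> ('a \<Rightarrow> real) set \<Rightarrow> ('a \<Rightarrow> real) \<Rightarrow> ('a \<Rightarrow> real) set" where
  "law_class M S Z = {Z'\<in>S. distr M borel Z' = distr M borel Z}"

end

theory Submission
  imports Defs
begin

context prob_space
begin

lemma na_small_pow:
  assumes na: "nonatomic M" and A: "A \<in> events" "0 < prob A"
  shows "\<exists>B\<in>events. B \<subseteq> A \<and> 0 < prob B \<and> prob B \<le> prob A / 2 ^ n"
proof (induction n)
  case 0
  then show ?case using A by auto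
next
  case (Suc n)
  then obtain B where B: "B \<in> events" "B \<subseteq> A" "0 < prob B" "prob B \<le> prob A / 2 ^ n" by auto
  from na B obtain B' where B': "B' \<in> events" "B' \<subseteq> B" "0 < prob B'" "prob B' < prob B"
    unfolding nonatomic_def by blast
  have d: "prob (B - B') = prob B - prob B'" using B B' by (simp add: finite_measure_Diff)
  show ?case
  proof (cases "prob B' \<le> prob B / 2")
    case True
    then show ?thesis using B B' by (intro bexI[of _ B']) auto
  next
    case False
    then show ?thesis using B B' d by (intro bexI[of _ "B - B'"]) auto
  qed
qed

lemma na_small:
  assumes na: "nonatomic M" and A: "A \<in> events" "0 < prob A" and e: "0 < e"
  shows "\<exists>B\<in>events. B \<subseteq> A \<and> 0 < prob B \<and> prob B < e"
proof -
  obtain n where n: "(1/2::real) ^ n < e" using real_arch_pow_inv[OF e, of "1/2"] by auto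
  obtain B where B: "B\<in>events" "B \<subseteq> A" "0 < prob B" "prob B \<le> prob A / 2 ^ n"
    using na_small_pow[OF na A] by blast
  have "prob A / 2 ^ n \<le> 1 / 2 ^ n" by (intro divide_right_mono) auto
  also have "\<dots> = (1/2) ^ n" by (simp add: power_divide)
  finally show ?thesis using B n by (intro bexI[of _ B]) auto
qed

lemma na_ivp:
  assumes na: "nonatomic M" and A: "A \<in> events" and t: "0 \<le> t" "t \<le> prob A"
  shows "\<exists>B\<in>events. B \<subseteq> A \<and> prob B = t"
proof -
  define cand where "cand B = {prob C | C. C \<in> events \<and> C \<subseteq> A - B \<and> prob B + prob C \<le> t}" for B
  define s where "s B = Sup (cand B)" for B
  define P where "P B C \<longleftrightarrow> C \<in> events \<and> C \<subseteq> A - B \<and> prob B + prob C \<le> t \<and> s B \<le> 2 * prob C" for B C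
  define Inv where "Inv B \<longleftrightarrow> B \<in> events \<and> B \<subseteq> A \<and> prob B \<le> t" for B
  define step where "step B = B \<union> (SOME C. P B C)" for B
  have bdd: "bdd_above (cand B)" for B unfolding cand_def by (auto intro!: bdd_aboveI[of _ 1])
  have ne: "cand B \<noteq> {}" if "Inv B" for B
    using that unfolding cand_def Inv_def by (auto intro!: exI[of _ "{}"])
  have exP: "\<exists>C. P B C" if IB: "Inv B" for B
  proof (cases "s B \<le> 0")
    case True
    then show ?thesis using that unfolding P_def Inv_def by (auto intro!: exI[of _ "{}"])
  next
    case False
    then have "s B / 2 < Sup (cand B)" unfolding s_def by auto
    then obtain x where "x \<in> cand B" "s B / 2 < x"
      using less_cSup_iff[OF ne[OF IB] bdd] by auto
    then show ?thesis unfolding cand_def P_def by auto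
  qed
  have PS: "P B (SOME C. P B C)" if "Inv B" for B using someI_ex[OF exP[OF that]] .
  define Bs where "Bs n = (step ^^ n) {}" for n
  define Cs where "Cs n = (SOME C. P (Bs n) C)" for n
  have InvBs: "Inv (Bs n)" for n
  proof (induction n)
    case 0 then show ?case using t by (simp add: Bs_def Inv_def)
  next
    case (Suc n)
    have "P (Bs n) (Cs n)" using PS[OF Suc] by (simp add: Cs_def)
    moreover have "Bs (Suc n) = Bs n \<union> Cs n" by (simp add: Bs_def Cs_def step_def)
    moreover have "prob (Bs n \<union> Cs n) = prob (Bs n) + prob (Cs n)"
      using calculation Suc unfolding P_def Inv_def by (intro finite_measure_Union) auto
    ultimately show ?case using Suc unfolding P_def Inv_def by auto
  qed
  have PC: "P (Bs n) (Cs n)" for n using PS[OF InvBs[of n]] by (simp add: Cs_def)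
  have Bsuc: "Bs (Suc n) = Bs n \<union> Cs n" for n by (simp add: Bs_def Cs_def step_def)
  have padd: "prob (Bs (Suc n)) = prob (Bs n) + prob (Cs n)" for n
    using PC[of n] InvBs[of n] unfolding Bsuc P_def Inv_def by (intro finite_measure_Union) auto
  have inc: "incseq Bs" by (rule incseq_SucI) (auto simp: Bsuc)
  have rng: "range Bs \<subseteq> events" using InvBs unfolding Inv_def by auto
  define B where "B = (\<Union>n. Bs n)"
  have lim: "(\<lambda>n. prob (Bs n)) \<longlonglongrightarrow> prob B"
    unfolding B_def by (rule finite_Lim_measure_incseq[OF rng inc])
  have Bev: "B \<in> events" using rng unfolding B_def by auto
  have BA: "B \<subseteq> A" using InvBs unfolding B_def Inv_def by auto
  have Ble: "prob B \<le> t"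
    using InvBs unfolding Inv_def by (intro LIMSEQ_le_const2[OF lim]) auto
  have limC: "(\<lambda>n. prob (Cs n)) \<longlonglongrightarrow> 0"
  proof -
    have "(\<lambda>n. prob (Bs (Suc n)) - prob (Bs n)) \<longlonglongrightarrow> prob B - prob B"
      by (intro tendsto_diff lim LIMSEQ_Suc)
    then show ?thesis using padd by simp
  qed
  show ?thesis
  proof (cases "prob B < t")
    case False
    then show ?thesis using Ble Bev BA by (intro bexI[of _ B]) auto
  next
    case True
    have "prob (A - B) = prob A - prob B" using Bev A BA by (simp add: finite_measure_Diff)
    then have pos: "0 < prob (A - B)" using True t by auto
    obtain C where C: "C \<in> events" "C \<subseteq> A - B" "0 < prob C" "prob C < t - prob B"
      using na_small[OF na _ pos, of "t - prob B"] Bev A True by auto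
    have "prob C \<le> 2 * prob (Cs n)" for n
    proof -
      have "prob (Bs n) \<le> prob B" unfolding B_def
        using rng by (intro finite_measure_mono) auto
      moreover have "C \<subseteq> A - Bs n" using C unfolding B_def by auto
      ultimately have "prob C \<in> cand (Bs n)" unfolding cand_def using C
        by (intro CollectI exI[of _ C]) auto
      then have "prob C \<le> s (Bs n)" unfolding s_def by (intro cSup_upper bdd)
      then show ?thesis using PC[of n] unfolding P_def by auto
    qed
    moreover have L: "(\<lambda>n. 2 * prob (Cs n)) \<longlonglongrightarrow> 0"
      using tendsto_mult[OF tendsto_const limC, of 2] by simp
    ultimately have "prob C \<le> 0" using LIMSEQ_le_const[OF L, of "prob C"] by auto
    then show ?thesis using C by auto
  qed
qed

end

primrec dy :: "'a measure \<Rightarrow> 'a set \<Rightarrow> nat \<Rightarrow> nat \<Rightarrow> 'a set" where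
  "dy M Q 0 k = (if k = 0 then {} else Q)"
| "dy M Q (Suc n) k = (if even k then dy M Q n (k div 2) else
     (SOME B. B \<in> sets M \<and> dy M Q n (k div 2) \<subseteq> B \<and> B \<subseteq> dy M Q n (Suc (k div 2))
        \<and> measure M B = real k / 2 ^ Suc n * measure M Q))"

context prob_space
begin

lemma dy_inv:
  assumes na: "nonatomic M" and Q: "Q \<in> events"
  shows "(\<forall>k\<le>2^n. dy M Q n k \<in> events \<and> prob (dy M Q n k) = real k / 2 ^ n * prob Q
            \<and> dy M Q n k \<subseteq> Q) \<and> (\<forall>k<2^n. dy M Q n k \<subseteq> dy M Q n (Suc k))"
proof (induction n)
  case 0
  show ?case using Q by auto
next
  case (Suc n)
  note IH = Suc
  define SB where "SB k = (SOME B. B \<in> events \<and> dy M Q n (k div 2) \<subseteq> B \<and> B \<subseteq> dy M Q n (Suc (k div 2))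
        \<and> prob B = real k / 2 ^ Suc n * prob Q)" for k
  have odd: "SB k \<in> events \<and> dy M Q n (k div 2) \<subseteq> SB k \<and> SB k \<subseteq> dy M Q n (Suc (k div 2))
        \<and> prob (SB k) = real k / 2 ^ Suc n * prob Q" if "odd k" "k \<le> 2 ^ Suc n" for k
  proof -
    define j where "j = k div 2"
    have kj: "k = 2 * j + 1" using that(1) unfolding j_def by simp
    have jl: "Suc j \<le> 2 ^ n" using that kj by auto
    have A1: "dy M Q n j \<in> events" "prob (dy M Q n j) = real j / 2 ^ n * prob Q"
      using IH jl by auto
    have A2: "dy M Q n (Suc j) \<in> events" "prob (dy M Q n (Suc j)) = real (Suc j) / 2 ^ n * prob Q"
      using IH jl by auto
    have sub: "dy M Q n j \<subseteq> dy M Q n (Suc j)" using IH jl by auto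
    have pd: "prob (dy M Q n (Suc j) - dy M Q n j) = prob Q / 2 ^ n"
      using A1 A2 sub by (simp add: finite_measure_Diff field_simps)
    have "0 \<le> prob Q / 2 ^ Suc n" by simp
    moreover have "prob Q / 2 ^ Suc n \<le> prob Q / 2 ^ n" by (simp add: divide_left_mono)
    ultimately obtain B0 where B0: "B0 \<in> events" "B0 \<subseteq> dy M Q n (Suc j) - dy M Q n j"
       "prob B0 = prob Q / 2 ^ Suc n"
      using na_ivp[OF na, of "dy M Q n (Suc j) - dy M Q n j" "prob Q / 2 ^ Suc n"] pd A1 A2 by auto
    define B where "B = dy M Q n j \<union> B0"
    have "prob B = prob (dy M Q n j) + prob B0" unfolding B_def
      using B0 A1 by (intro finite_measure_Union) auto
    also have "\<dots> = real k / 2 ^ Suc n * prob Q" using A1 B0 kj by (simp add: field_simps)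
    finally have "B \<in> events \<and> dy M Q n (k div 2) \<subseteq> B \<and> B \<subseteq> dy M Q n (Suc (k div 2))
        \<and> prob B = real k / 2 ^ Suc n * prob Q"
      using B0 A1 sub unfolding B_def j_def[symmetric] by auto
    then show ?thesis unfolding SB_def by (rule someI)
  qed
  have dS: "dy M Q (Suc n) k = (if even k then dy M Q n (k div 2) else SB k)" for k
    by (simp add: SB_def)
  show ?case
  proof (rule conjI; intro allI impI)
    fix k :: nat assume k: "k \<le> 2 ^ Suc n"
    show "dy M Q (Suc n) k \<in> events \<and> prob (dy M Q (Suc n) k) = real k / 2 ^ Suc n * prob Q
       \<and> dy M Q (Suc n) k \<subseteq> Q"
    proof (cases "even k")
      case True
      then have "k div 2 \<le> 2 ^ n" using k by auto
      moreover have "real (k div 2) / 2 ^ n = real k / 2 ^ Suc n" using True by auto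
      ultimately show ?thesis using IH True by (auto simp: dS)
    next
      case False
      obtain j where kj: "k = 2 * j + 1" using False oddE by blast
      have "(2::nat) ^ Suc n = 2 * 2 ^ n" by simp
      then have "Suc j \<le> 2 ^ n" using k kj by linarith
      moreover have "k div 2 = j" using kj by simp
      ultimately have "dy M Q n (Suc (k div 2)) \<subseteq> Q" using IH by auto
      moreover have e: "dy M Q (Suc n) k = SB k" using False by (simp add: SB_def)
      ultimately show ?thesis using odd[OF False k] unfolding e by blast
    qed
  next
    fix k :: nat assume k: "k < 2 ^ Suc n"
    show "dy M Q (Suc n) k \<subseteq> dy M Q (Suc n) (Suc k)"
    proof (cases "even k")
      case True
      then have "odd (Suc k)" "Suc k div 2 = k div 2" by auto
      moreover have "Suc k \<le> 2 ^ Suc n" using k by auto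
      moreover have e: "dy M Q (Suc n) (Suc k) = SB (Suc k)" using calculation by (simp add: SB_def)
      moreover have e2: "dy M Q (Suc n) k = dy M Q n (k div 2)" using True by simp
      ultimately show ?thesis using odd[of "Suc k"] unfolding e e2 by auto
    next
      case False
      obtain j where kj: "k = 2 * j + 1" using False oddE by blast
      then have "even (Suc k)" "Suc k div 2 = Suc (k div 2)" by simp_all
      moreover have e: "dy M Q (Suc n) k = SB k" using False by (simp add: SB_def)
      moreover have e2: "dy M Q (Suc n) (Suc k) = dy M Q n (Suc (k div 2))" using calculation by simp
      ultimately show ?thesis using odd[of k] False k unfolding e e2 by auto
    qed
  qed
qed

lemma dy_scale: "dy M Q (n + m) (k * 2 ^ m) = dy M Q n k"
proof (induction m)
  case 0 then show ?case by simp
next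
  case (Suc m)
  have ev: "even (k * 2 ^ Suc m)" by simp
  have "dy M Q (n + Suc m) (k * 2 ^ Suc m) = dy M Q (n + m) (k * 2 ^ Suc m div 2)"
    by (simp only: add_Suc_right dy.simps(2) ev if_True)
  also have "k * 2 ^ Suc m div 2 = k * 2 ^ m" by simp
  finally show ?case using Suc by simp
qed
lemma dy_mono_level:
  assumes na: "nonatomic M" and Q: "Q \<in> events" and kk: "k \<le> k'" "k' \<le> 2 ^ n"
  shows "dy M Q n k \<subseteq> dy M Q n k'"
  using kk(1,2)
proof (induction k' rule: dec_induct)
  case base then show ?case by simp
next
  case (step m)
  then have "dy M Q n m \<subseteq> dy M Q n (Suc m)" using dy_inv[OF na Q, of n] by auto
  then show ?case using step by auto
qed

lemma dy_mono:
  assumes na: "nonatomic M" and Q: "Q \<in> events"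
    and k: "k \<le> 2 ^ n" "k' \<le> 2 ^ n'" and le: "real k / 2 ^ n \<le> real k' / 2 ^ n'"
  shows "dy M Q n k \<subseteq> dy M Q n' k'"
proof -
  have e1: "dy M Q n k = dy M Q (n + n') (k * 2 ^ n')" by (simp only: dy_scale)
  have e2: "dy M Q n' k' = dy M Q (n + n') (k' * 2 ^ n)" using dy_scale[of Q n' n k'] by (simp only: add.commute)
  have "real k / 2 ^ n * (2 ^ n * 2 ^ n') \<le> real k' / 2 ^ n' * (2 ^ n * 2 ^ n')"
    by (rule mult_right_mono[OF le]) simp
  then have "real k * 2 ^ n' \<le> real k' * 2 ^ n" by simp
  then have "real (k * 2 ^ n') \<le> real (k' * 2 ^ n)" by simp
  then have "k * 2 ^ n' \<le> k' * 2 ^ n" by (simp only: of_nat_le_iff)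
  moreover have "k' * 2 ^ n \<le> 2 ^ (n + n')" using mult_right_mono[OF k(2), of "2^n"] by (simp add: power_add mult.commute)
  ultimately show ?thesis unfolding e1 e2 by (rule dy_mono_level[OF na Q])
qed

end

context prob_space
begin

lemma ceil_K:
  fixes x :: real and n K :: nat
  assumes x: "0 < x" "x \<le> 1"
  and K_def: "K = nat \<lceil>x * 2 ^ n\<rceil> - 1"
  shows "K \<le> 2 ^ n" "real K / 2 ^ n < x" "x - 1 / 2 ^ n \<le> real K / 2 ^ n"
    "\<And>k. real k / 2 ^ n < x \<Longrightarrow> k \<le> K"
proof -
  have pos: "0 < x * 2 ^ n" using x by simp
  then have c1: "1 \<le> \<lceil>x * 2 ^ n\<rceil>" by (simp add: one_le_ceiling)
  have n1: "1 \<le> nat \<lceil>x * 2 ^ n\<rceil>" using c1 by linarith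
  have n2: "real (nat \<lceil>x * 2 ^ n\<rceil>) = real_of_int \<lceil>x * 2 ^ n\<rceil>" using c1 by simp
  have rK: "real K = real_of_int \<lceil>x * 2 ^ n\<rceil> - 1" unfolding K_def
    using of_nat_diff[OF n1, where 'a=real] n2 by simp
  have cu: "real_of_int \<lceil>x * 2 ^ n\<rceil> < x * 2 ^ n + 1" using ceiling_correct[of "x * 2 ^ n"] by linarith
  have cl: "x * 2 ^ n \<le> real_of_int \<lceil>x * 2 ^ n\<rceil>" by (rule le_of_int_ceiling)
  have "x * 2 ^ n \<le> 2 ^ n" using x by simp
  then have "\<lceil>x * 2 ^ n\<rceil> \<le> 2 ^ n" by (metis ceiling_le_iff of_int_numeral of_int_power)
  then have "nat \<lceil>x * 2 ^ n\<rceil> \<le> 2 ^ n" by (simp add: nat_le_iff)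
  then show "K \<le> 2 ^ n" unfolding K_def by linarith
  show "real K / 2 ^ n < x" using ceiling_correct[of "x * 2 ^ n"] rK by (simp add: divide_less_eq)
  have "x * 2 ^ n - 1 \<le> real K" using cl rK by linarith
  then have "(x * 2 ^ n - 1) / 2 ^ n \<le> real K / 2 ^ n" by (simp add: divide_right_mono)
  then show "x - 1 / 2 ^ n \<le> real K / 2 ^ n" by (simp add: diff_divide_distrib)
  fix k :: nat assume "real k / 2 ^ n < x"
  then have "real k < x * 2 ^ n" by (simp add: divide_less_eq)
  then have "real k < real K + 1" using rK cl cu by linarith
  then show "k \<le> K" by linarith
qed

lemma uniform_on:
  assumes na: "nonatomic M" and Q: "Q \<in> events"
  shows "\<exists>U\<in>borel_measurable M. (\<forall>\<omega>. 0 \<le> U \<omega> \<and> U \<omega> \<le> 1) \<and>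
     (\<forall>x. 0 < x \<longrightarrow> x \<le> 1 \<longrightarrow> prob (Q \<inter> {\<omega>\<in>space M. U \<omega> < x}) = x * prob Q)"
proof -
  define D where "D \<omega> = {real k / 2 ^ n | n k. k \<le> 2 ^ n \<and> \<omega> \<in> dy M Q n k}" for \<omega>
  define U where "U \<omega> = (if \<omega> \<in> Q then Inf (D \<omega>) else 0)" for \<omega>
  have inv: "\<And>n k. k \<le> 2 ^ n \<Longrightarrow> dy M Q n k \<in> events \<and> prob (dy M Q n k) = real k / 2 ^ n * prob Q
            \<and> dy M Q n k \<subseteq> Q" using dy_inv[OF na Q] by blast
  have Qsp: "Q \<subseteq> space M" using Q sets.sets_into_space by auto
  have Dne: "1 \<in> D \<omega>" if "\<omega> \<in> Q" for \<omega>
    unfolding D_def using that by (intro CollectI exI[of _ 0] exI[of _ "1::nat"]) auto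
  have Dbdd: "bdd_below (D \<omega>)" for \<omega> unfolding D_def by (intro bdd_belowI[of _ 0]) auto
  have U01: "0 \<le> U \<omega> \<and> U \<omega> \<le> 1" for \<omega>
  proof (cases "\<omega> \<in> Q")
    case True
    have "0 \<le> Inf (D \<omega>)" using Dne[OF True] by (intro cInf_greatest) (auto simp: D_def)
    moreover have "Inf (D \<omega>) \<le> 1" using Dne[OF True] Dbdd by (intro cInf_lower)
    ultimately show ?thesis using True by (simp add: U_def)
  qed (simp add: U_def)
  have Uless: "U \<omega> < x \<longleftrightarrow> (\<exists>n k. k \<le> 2 ^ n \<and> \<omega> \<in> dy M Q n k \<and> real k / 2 ^ n < x)"
    if "\<omega> \<in> Q" for \<omega> x
  proof -
    have ne: "D \<omega> \<noteq> {}" using Dne[OF that] by auto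
    have "U \<omega> < x \<longleftrightarrow> (\<exists>y\<in>D \<omega>. y < x)" using that cInf_less_iff[OF ne Dbdd, of x]
      by (simp add: U_def)
    also have "\<dots> \<longleftrightarrow> (\<exists>n k. k \<le> 2 ^ n \<and> \<omega> \<in> dy M Q n k \<and> real k / 2 ^ n < x)"
      unfolding D_def by blast
    finally show ?thesis .
  qed
  have Umeas: "U \<in> borel_measurable M"
  proof (rule borel_measurableI_less)
    fix x :: real
    have "{\<omega>\<in>space M. U \<omega> < x} = (\<Union>n. \<Union>k\<in>{k. k \<le> 2 ^ n \<and> real k / 2 ^ n < x}. dy M Q n k)
         \<union> {\<omega>\<in>space M. \<omega> \<notin> Q \<and> 0 < x}" (is "?L = ?R")
    proof (intro equalityI subsetI)
      fix \<omega> assume "\<omega> \<in> ?L"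
      then show "\<omega> \<in> ?R" using Uless[of \<omega> x] by (cases "\<omega> \<in> Q") (auto simp: U_def)
    next
      fix \<omega> assume w: "\<omega> \<in> ?R"
      show "\<omega> \<in> ?L"
      proof (cases "\<omega> \<in> Q")
        case True
        then have "\<exists>n k. k \<le> 2 ^ n \<and> \<omega> \<in> dy M Q n k \<and> real k / 2 ^ n < x" using w by auto
        then show ?thesis using Uless[OF True] True Qsp by auto
      next
        case False
        then show ?thesis using w inv by (auto simp: U_def)
      qed
    qed
    moreover have "{\<omega>\<in>space M. \<omega> \<notin> Q \<and> 0 < x} \<in> events"
      using Q by (cases "0 < x") (auto intro!: sets.Diff[of "space M" _ Q, simplified set_diff_eq] simp: set_diff_eq)
    moreover have "?R \<in> events"
      using inv calculation(2) by (intro sets.Un sets.countable_UN sets.finite_UN) auto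
    ultimately show "{\<omega>\<in>space M. U \<omega> < x} \<in> events" by simp
  qed
  have main: "prob (Q \<inter> {\<omega>\<in>space M. U \<omega> < x}) = x * prob Q" if x: "0 < x" "x \<le> 1" for x
  proof -
    define K where "K n = nat \<lceil>x * 2 ^ n\<rceil> - 1" for n
    note KK = ceil_K[OF x K_def]
    have seq: "Q \<inter> {\<omega>\<in>space M. U \<omega> < x} = (\<Union>n. dy M Q n (K n))"
    proof (intro equalityI subsetI)
      fix \<omega> assume w: "\<omega> \<in> Q \<inter> {\<omega>\<in>space M. U \<omega> < x}"
      then obtain n k where nk: "k \<le> 2 ^ n" "\<omega> \<in> dy M Q n k" "real k / 2 ^ n < x"
        using Uless[of \<omega> x] by auto
      then have "dy M Q n k \<subseteq> dy M Q n (K n)"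
        using KK by (intro dy_mono_level[OF na Q]) auto
      then show "\<omega> \<in> (\<Union>n. dy M Q n (K n))" using nk by auto
    next
      fix \<omega> assume "\<omega> \<in> (\<Union>n. dy M Q n (K n))"
      then obtain n where n: "\<omega> \<in> dy M Q n (K n)" by auto
      then have "\<omega> \<in> Q" using inv KK by blast
      then show "\<omega> \<in> Q \<inter> {\<omega>\<in>space M. U \<omega> < x}" using Uless[of \<omega> x] n KK Qsp by blast
    qed
    have inc: "incseq (\<lambda>n. dy M Q n (K n))"
    proof (rule incseq_SucI)
      fix n
      have "real (2 * K n) / 2 ^ Suc n = real (K n) / 2 ^ n" by simp
      then have "2 * K n \<le> K (Suc n)" using KK(2)[of n] KK(4)[of "2 * K n" "Suc n"] by simp
      then have "real (K n) / 2 ^ n \<le> real (K (Suc n)) / 2 ^ Suc n" by (simp add: field_simps)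
      then show "dy M Q n (K n) \<subseteq> dy M Q (Suc n) (K (Suc n))"
        by (intro dy_mono[OF na Q KK(1) KK(1)])
    qed
    have rng: "range (\<lambda>n. dy M Q n (K n)) \<subseteq> events" using inv KK by auto
    have L1: "(\<lambda>n. prob (dy M Q n (K n))) \<longlonglongrightarrow> prob (\<Union>n. dy M Q n (K n))"
      by (rule finite_Lim_measure_incseq[OF rng inc])
    have pe: "prob (dy M Q n (K n)) = real (K n) / 2 ^ n * prob Q" for n using inv KK by auto
    have L2: "(\<lambda>n. real (K n) / 2 ^ n) \<longlonglongrightarrow> x"
    proof (rule tendsto_sandwich[of "\<lambda>n. x - (1/2) ^ n" _ _ "\<lambda>n. x"])
      show "\<forall>\<^sub>F n in sequentially. x - (1 / 2) ^ n \<le> real (K n) / 2 ^ n"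
        using KK(3) by (simp add: power_divide)
      show "\<forall>\<^sub>F n in sequentially. real (K n) / 2 ^ n \<le> x" using KK(2) by (simp add: less_imp_le)
      have "(\<lambda>n. x - (1/2::real) ^ n) \<longlonglongrightarrow> x - 0"
        by (intro tendsto_diff tendsto_const LIMSEQ_power_zero) auto
      then show "(\<lambda>n. x - (1/2::real) ^ n) \<longlonglongrightarrow> x" by simp
    qed simp
    have "(\<lambda>n. prob (dy M Q n (K n))) \<longlonglongrightarrow> x * prob Q"
      unfolding pe by (intro tendsto_mult L2 tendsto_const)
    then show ?thesis using L1 seq LIMSEQ_unique by metis
  qed
  show ?thesis using Umeas U01 main by blast
qed

end

context prob_space
begin

lemma uniform_on2:
  assumes na: "nonatomic M" and Q: "Q \<in> events"
  shows "\<exists>U\<in>borel_measurable M. (AE \<omega> in M. \<omega> \<in> Q \<longrightarrow> 0 < U \<omega> \<and> U \<omega> < 1) \<and>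
     (\<forall>c. 0 \<le> c \<longrightarrow> c \<le> 1 \<longrightarrow> prob (Q \<inter> {\<omega>\<in>space M. U \<omega> \<le> c}) = c * prob Q)"
proof -
  obtain U where Um[measurable]: "U \<in> borel_measurable M" and U01: "\<And>\<omega>. 0 \<le> U \<omega> \<and> U \<omega> \<le> 1"
    and Ul: "\<And>x. 0 < x \<Longrightarrow> x \<le> 1 \<Longrightarrow> prob (Q \<inter> {\<omega>\<in>space M. U \<omega> < x}) = x * prob Q"
    using uniform_on[OF na Q] by blast
  have Qsp: "Q \<subseteq> space M" using Q sets.sets_into_space by auto
  have Ul2: "prob (Q \<inter> {\<omega>\<in>space M. U \<omega> < x}) = min x 1 * prob Q" if "0 < x" for x
  proof (cases "x \<le> 1")
    case True then show ?thesis using Ul that by simp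
  next
    case False
    have "U \<omega> < x" for \<omega> using U01[of \<omega>] False by linarith
    then have "Q \<inter> {\<omega>\<in>space M. U \<omega> < x} = Q" using Qsp by blast
    then show ?thesis using False by simp
  qed
  have G: "prob (Q \<inter> {\<omega>\<in>space M. U \<omega> \<le> c}) = c * prob Q" if c: "0 \<le> c" "c \<le> 1" for c
  proof -
    define A where "A m = Q \<inter> {\<omega>\<in>space M. U \<omega> < c + inverse (real (Suc m))}" for m
    have rng: "range A \<subseteq> events" unfolding A_def using Q by auto
    have dec: "decseq A"
    proof (rule decseq_SucI)
      fix m
      have "inverse (real (Suc (Suc m))) \<le> inverse (real (Suc m))"
        by (intro le_imp_inverse_le) auto
      then have "U \<omega> < c + inverse (real (Suc m))" if "U \<omega> < c + inverse (real (Suc (Suc m)))" for \<omega>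
        using that by linarith
      then show "A (Suc m) \<subseteq> A m" unfolding A_def by blast
    qed
    have int: "(\<Inter>m. A m) = Q \<inter> {\<omega>\<in>space M. U \<omega> \<le> c}"
    proof (intro equalityI subsetI)
      fix \<omega> assume w: "\<omega> \<in> (\<Inter>m. A m)"
      have "U \<omega> \<le> c"
      proof (rule ccontr)
        assume "\<not> U \<omega> \<le> c"
        then have "0 < U \<omega> - c" by simp
        then obtain m where m: "inverse (real (Suc m)) < U \<omega> - c" using reals_Archimedean by blast
        have "\<omega> \<in> A m" using w by blast
        then have "U \<omega> < c + inverse (real (Suc m))" unfolding A_def by blast
        then show False using m by linarith
      qed
      then show "\<omega> \<in> Q \<inter> {\<omega>\<in>space M. U \<omega> \<le> c}" using w unfolding A_def by auto
    next
      fix \<omega> assume "\<omega> \<in> Q \<inter> {\<omega>\<in>space M. U \<omega> \<le> c}"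
      then show "\<omega> \<in> (\<Inter>m. A m)" unfolding A_def
        by (auto intro: le_less_trans[OF _ less_add_same_cancel1[THEN iffD2]])
    qed
    have L1: "(\<lambda>m. prob (A m)) \<longlonglongrightarrow> prob (Q \<inter> {\<omega>\<in>space M. U \<omega> \<le> c})"
      using finite_Lim_measure_decseq[OF rng dec] int by simp
    have pA: "prob (A m) = min (c + inverse (real (Suc m))) 1 * prob Q" for m
      unfolding A_def using c by (intro Ul2) (simp add: add_nonneg_pos)
    have "(\<lambda>m. min (c + inverse (real (Suc m))) 1 * prob Q) \<longlonglongrightarrow> min (c + 0) 1 * prob Q"
      by (intro tendsto_mult tendsto_min tendsto_add tendsto_const LIMSEQ_inverse_real_of_nat)
    then have "(\<lambda>m. prob (A m)) \<longlonglongrightarrow> c * prob Q" using c unfolding pA by simp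
    then show ?thesis using L1 LIMSEQ_unique by metis
  qed
  have AE: "AE \<omega> in M. \<omega> \<in> Q \<longrightarrow> 0 < U \<omega> \<and> U \<omega> < 1"
  proof -
    have n1: "prob (Q \<inter> {\<omega>\<in>space M. U \<omega> \<le> 0}) = 0" using G[of 0] by simp
    have "Q \<inter> {\<omega>\<in>space M. 1 \<le> U \<omega>} = Q - (Q \<inter> {\<omega>\<in>space M. U \<omega> < 1})" using Qsp by auto
    then have n2: "prob (Q \<inter> {\<omega>\<in>space M. 1 \<le> U \<omega>}) = 0"
      using Ul[of 1] Q by (simp add: finite_measure_Diff)
    have "{\<omega>\<in>space M. \<not> (\<omega> \<in> Q \<longrightarrow> 0 < U \<omega> \<and> U \<omega> < 1)}
      = (Q \<inter> {\<omega>\<in>space M. U \<omega> \<le> 0}) \<union> (Q \<inter> {\<omega>\<in>space M. 1 \<le> U \<omega>})" by auto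
    moreover have "prob ((Q \<inter> {\<omega>\<in>space M. U \<omega> \<le> 0}) \<union> (Q \<inter> {\<omega>\<in>space M. 1 \<le> U \<omega>})) = 0"
    proof -
      have "prob ((Q \<inter> {\<omega>\<in>space M. U \<omega> \<le> 0}) \<union> (Q \<inter> {\<omega>\<in>space M. 1 \<le> U \<omega>}))
         \<le> prob (Q \<inter> {\<omega>\<in>space M. U \<omega> \<le> 0}) + prob (Q \<inter> {\<omega>\<in>space M. 1 \<le> U \<omega>})"
        using Q by (intro measure_subadditive) auto
      then show ?thesis using n1 n2 by (simp add: measure_nonneg antisym)
    qed
    ultimately show ?thesis using Q
      by (subst AE_iff_measurable[OF _ refl]) (auto simp: emeasure_eq_measure)
  qed
  show ?thesis using Um AE G by blast
qed

lemma realize: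
  assumes na: "nonatomic M" and Q: "Q \<in> events" and nu: "real_distribution \<nu>"
  shows "\<exists>W\<in>borel_measurable M. \<forall>y. prob (Q \<inter> {\<omega>\<in>space M. W \<omega> \<le> y}) = prob Q * cdf \<nu> y"
proof -
  interpret F: cdf_distribution \<nu> using nu by (simp add: cdf_distribution_def)
  obtain U where Um[measurable]: "U \<in> borel_measurable M"
    and AE: "AE \<omega> in M. \<omega> \<in> Q \<longrightarrow> 0 < U \<omega> \<and> U \<omega> < 1"
    and G: "\<And>c. 0 \<le> c \<Longrightarrow> c \<le> 1 \<Longrightarrow> prob (Q \<inter> {\<omega>\<in>space M. U \<omega> \<le> c}) = c * prob Q"
    using uniform_on2[OF na Q] by blast
  define W where "W \<omega> = (if 0 < U \<omega> \<and> U \<omega> < 1 then Inf {x. U \<omega> \<le> cdf \<nu> x} else 0)" for \<omega>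
  have Wle: "W \<omega> \<le> y \<longleftrightarrow> (0 < U \<omega> \<and> U \<omega> < 1 \<and> U \<omega> \<le> cdf \<nu> y) \<or> (\<not> (0 < U \<omega> \<and> U \<omega> < 1) \<and> 0 \<le> y)"
    for \<omega> y
    using F.pseudoinverse[of "U \<omega>" y] by (auto simp: W_def)
  have Wm: "W \<in> borel_measurable M"
  proof (rule borel_measurableI_le)
    fix y
    have "{\<omega>\<in>space M. W \<omega> \<le> y} = {\<omega>\<in>space M. (0 < U \<omega> \<and> U \<omega> < 1 \<and> U \<omega> \<le> cdf \<nu> y) \<or> (\<not> (0 < U \<omega> \<and> U \<omega> < 1) \<and> 0 \<le> y)}"
      using Wle by blast
    also have "\<dots> \<in> events" by measurable
    finally show "{\<omega>\<in>space M. W \<omega> \<le> y} \<in> events" .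
  qed
  have "prob (Q \<inter> {\<omega>\<in>space M. W \<omega> \<le> y}) = prob Q * cdf \<nu> y" for y
  proof -
    have "prob (Q \<inter> {\<omega>\<in>space M. W \<omega> \<le> y}) = prob (Q \<inter> {\<omega>\<in>space M. U \<omega> \<le> cdf \<nu> y})"
    proof (rule measure_eq_AE)
      show "AE \<omega> in M. (\<omega> \<in> Q \<inter> {\<omega>\<in>space M. W \<omega> \<le> y}) = (\<omega> \<in> Q \<inter> {\<omega>\<in>space M. U \<omega> \<le> cdf \<nu> y})"
        using AE by eventually_elim (auto simp: Wle)
      show "Q \<inter> {\<omega>\<in>space M. W \<omega> \<le> y} \<in> events" using Q Wm by measurable
      show "Q \<inter> {\<omega>\<in>space M. U \<omega> \<le> cdf \<nu> y} \<in> events" using Q by measurable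
    qed
    also have "\<dots> = cdf \<nu> y * prob Q" by (rule G) (auto simp: F.cdf_nonneg F.cdf_bounded_prob)
    finally show ?thesis by simp
  qed
  then show ?thesis using Wm by blast
qed

end

context prob_space
begin

lemma nonconst_split:
  fixes f :: "'a \<Rightarrow> real"
  assumes f: "integrable M f" and nc: "\<not> (\<exists>c. AE \<omega> in M. f \<omega> = c)"
  shows "0 < prob {\<omega>\<in>space M. expectation f < f \<omega>}" "0 < prob {\<omega>\<in>space M. f \<omega> \<le> expectation f}"
proof -
  define e where "e = expectation f"
  have fm[measurable]: "f \<in> borel_measurable M" using f by auto
  show "0 < prob {\<omega>\<in>space M. expectation f < f \<omega>}"
  proof (rule ccontr)
    assume "\<not> ?thesis"
    then have "prob {\<omega>\<in>space M. e < f \<omega>} = 0" using measure_nonneg[of M] unfolding e_def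
      by (meson antisym not_less)
    moreover have Nm: "{\<omega>\<in>space M. e < f \<omega>} \<in> events"
      using borel_measurable_less[OF borel_measurable_const fm] by simp
    moreover have "{\<omega>\<in>space M. \<not> f \<omega> \<le> e} = {\<omega>\<in>space M. e < f \<omega>}" by auto
    ultimately have "AE \<omega> in M. f \<omega> \<le> e"
      using AE_iff_measurable[of "{\<omega>\<in>space M. e < f \<omega>}" M "\<lambda>\<omega>. f \<omega> \<le> e"] by (simp add: emeasure_eq_measure)
    then have nn: "AE \<omega> in M. 0 \<le> e - f \<omega>" by eventually_elim simp
    have i: "integrable M (\<lambda>\<omega>. e - f \<omega>)" using f by auto
    have "integral\<^sup>L M (\<lambda>\<omega>. e - f \<omega>) = 0" using f by (simp add: prob_space e_def)
    then have "AE \<omega> in M. e - f \<omega> = 0" using integral_nonneg_eq_0_iff_AE[OF i nn] by simp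
    then have "AE \<omega> in M. f \<omega> = e" by eventually_elim simp
    then show False using nc by blast
  qed
  show "0 < prob {\<omega>\<in>space M. f \<omega> \<le> expectation f}"
  proof (rule ccontr)
    assume "\<not> ?thesis"
    then have "prob {\<omega>\<in>space M. f \<omega> \<le> e} = 0" using measure_nonneg[of M] unfolding e_def
      by (meson antisym not_less)
    moreover have Nm: "{\<omega>\<in>space M. f \<omega> \<le> e} \<in> events"
      using borel_measurable_le[OF fm borel_measurable_const] by simp
    moreover have "{\<omega>\<in>space M. \<not> e < f \<omega>} = {\<omega>\<in>space M. f \<omega> \<le> e}" by auto
    ultimately have ae: "AE \<omega> in M. e < f \<omega>"
      using AE_iff_measurable[of "{\<omega>\<in>space M. f \<omega> \<le> e}" M "\<lambda>\<omega>. e < f \<omega>"] by (simp add: emeasure_eq_measure)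
    then have nn: "AE \<omega> in M. 0 \<le> f \<omega> - e" by eventually_elim simp
    have i: "integrable M (\<lambda>\<omega>. f \<omega> - e)" using f by auto
    have "integral\<^sup>L M (\<lambda>\<omega>. f \<omega> - e) = 0" using f by (simp add: prob_space e_def)
    then have "AE \<omega> in M. f \<omega> - e = 0" using integral_nonneg_eq_0_iff_AE[OF i nn] by simp
    with ae have "AE \<omega> in M. False" by eventually_elim simp
    then show False by simp
  qed
qed

lemma cdf_distr_eq:
  assumes "X \<in> borel_measurable M"
  shows "cdf (distr M borel X) y = prob {\<omega>\<in>space M. X \<omega> \<le> y}"
proof -
  have "cdf (distr M borel X) y = measure M (X -` {..y} \<inter> space M)"
    unfolding cdf_def using assms by (simp add: measure_distr)
  also have "X -` {..y} \<inter> space M = {\<omega>\<in>space M. X \<omega> \<le> y}" by auto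
  finally show ?thesis .
qed

lemma cond_cdf:
  assumes L: "L \<in> events" "0 < prob L" and X[measurable]: "X \<in> borel_measurable M"
  shows "real_distribution (distr (uniform_measure M L) borel X)"
    "prob L * cdf (distr (uniform_measure M L) borel X) y = prob (L \<inter> {\<omega>\<in>space M. X \<omega> \<le> y})"
proof -
  have e1: "emeasure M L \<noteq> 0" "emeasure M L \<noteq> \<infinity>" using L(2) by (simp_all add: emeasure_eq_measure)
  interpret N: prob_space "uniform_measure M L" by (rule prob_space_uniform_measure[OF e1])
  have Xm: "X \<in> borel_measurable (uniform_measure M L)"
    using X measurable_cong_sets[OF sets_uniform_measure[of M L] refl, of borel] by simp
  show "real_distribution (distr (uniform_measure M L) borel X)"
    using Xm by (rule N.real_distribution_distr)
  have "cdf (distr (uniform_measure M L) borel X) y = measure (uniform_measure M L) {\<omega>\<in>space M. X \<omega> \<le> y}"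
    using N.cdf_distr_eq[OF Xm] by simp
  also have "\<dots> = prob (L \<inter> {\<omega>\<in>space M. X \<omega> \<le> y}) / prob L"
    using measure_uniform_measure[OF e1, of "{\<omega>\<in>space M. X \<omega> \<le> y}"] borel_measurable_le[OF X borel_measurable_const, of y] by simp
  finally show "prob L * cdf (distr (uniform_measure M L) borel X) y = prob (L \<inter> {\<omega>\<in>space M. X \<omega> \<le> y})"
    using L by simp
qed

lemma AE_from_zero:
  fixes W :: "'a \<Rightarrow> real"
  assumes Q: "Q \<in> events" and W: "W \<in> borel_measurable M" and p: "prob (Q \<inter> {\<omega>\<in>space M. W \<omega> \<le> s}) = 0"
  shows "AE \<omega> in M. \<omega> \<in> Q \<longrightarrow> s < W \<omega>"
proof -
  have N: "Q \<inter> {\<omega>\<in>space M. W \<omega> \<le> s} \<in> events"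
    using Q borel_measurable_le[OF W borel_measurable_const] by auto
  have "{\<omega>\<in>space M. \<not> (\<omega> \<in> Q \<longrightarrow> s < W \<omega>)} = Q \<inter> {\<omega>\<in>space M. W \<omega> \<le> s}" by auto
  then show ?thesis using AE_iff_measurable[OF N, of "\<lambda>\<omega>. \<omega> \<in> Q \<longrightarrow> s < W \<omega>"] p
    by (simp add: emeasure_eq_measure)
qed

lemma AE_from_full:
  fixes W :: "'a \<Rightarrow> real"
  assumes Q: "Q \<in> events" and W: "W \<in> borel_measurable M"
    and p: "prob (Q \<inter> {\<omega>\<in>space M. W \<omega> \<le> s}) = prob Q"
  shows "AE \<omega> in M. \<omega> \<in> Q \<longrightarrow> W \<omega> \<le> s"
proof -
  have Qs: "Q \<subseteq> space M" using Q sets.sets_into_space by auto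
  have N0: "Q \<inter> {\<omega>\<in>space M. W \<omega> \<le> s} \<in> events"
    using Q borel_measurable_le[OF W borel_measurable_const] by auto
  have N: "Q \<inter> {\<omega>\<in>space M. s < W \<omega>} \<in> events"
    using Q borel_measurable_less[OF borel_measurable_const W] by auto
  have "Q \<inter> {\<omega>\<in>space M. s < W \<omega>} = Q - (Q \<inter> {\<omega>\<in>space M. W \<omega> \<le> s})" using Qs by auto
  then have pz: "prob (Q \<inter> {\<omega>\<in>space M. s < W \<omega>}) = 0" using p Q N0 by (simp add: finite_measure_Diff)
  have "{\<omega>\<in>space M. \<not> (\<omega> \<in> Q \<longrightarrow> W \<omega> \<le> s)} = Q \<inter> {\<omega>\<in>space M. s < W \<omega>}" by auto
  then show ?thesis using AE_iff_measurable[OF N, of "\<lambda>\<omega>. \<omega> \<in> Q \<longrightarrow> W \<omega> \<le> s"] pz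
    by (simp add: emeasure_eq_measure)
qed

lemma piece4:
  fixes W1 W2 W3 W4 :: "'a \<Rightarrow> real"
  assumes C: "C \<in> events" and D: "D \<in> events" and E1: "E1 \<in> events"
    and disj: "C \<inter> D = {}" "C \<inter> E1 = {}" "D \<inter> E1 = {}"
    and W1: "W1 \<in> borel_measurable M" and W2: "W2 \<in> borel_measurable M"
    and W3: "W3 \<in> borel_measurable M" and W4: "W4 \<in> borel_measurable M"
  defines "Z1 \<equiv> (\<lambda>\<omega>. if \<omega> \<in> C then W1 \<omega> else if \<omega> \<in> D then W2 \<omega> else if \<omega> \<in> E1 then W3 \<omega> else W4 \<omega>)"
  shows "Z1 \<in> borel_measurable M"
    "prob {\<omega>\<in>space M. Z1 \<omega> \<le> y} = prob (C \<inter> {\<omega>\<in>space M. W1 \<omega> \<le> y}) + prob (D \<inter> {\<omega>\<in>space M. W2 \<omega> \<le> y})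
       + prob (E1 \<inter> {\<omega>\<in>space M. W3 \<omega> \<le> y}) + prob ((space M - C - D - E1) \<inter> {\<omega>\<in>space M. W4 \<omega> \<le> y})"
proof -
  have Cs: "C \<subseteq> space M" "D \<subseteq> space M" "E1 \<subseteq> space M" using C D E1 sets.sets_into_space by auto
  have i: "C \<inter> space M \<in> events" "D \<inter> space M \<in> events" "E1 \<inter> space M \<in> events"
    using C D E1 Cs by (simp_all add: Int_absorb2)
  show "Z1 \<in> borel_measurable M" unfolding Z1_def
    by (intro measurable_If_set W1 W2 W3 W4 i)
  define S1 where "S1 = C \<inter> {\<omega>\<in>space M. W1 \<omega> \<le> y}"
  define S2 where "S2 = D \<inter> {\<omega>\<in>space M. W2 \<omega> \<le> y}"
  define S3 where "S3 = E1 \<inter> {\<omega>\<in>space M. W3 \<omega> \<le> y}"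
  define S4 where "S4 = (space M - C - D - E1) \<inter> {\<omega>\<in>space M. W4 \<omega> \<le> y}"
  have eq: "{\<omega>\<in>space M. Z1 \<omega> \<le> y} = ((S1 \<union> S2) \<union> S3) \<union> S4"
    unfolding Z1_def S1_def S2_def S3_def S4_def using Cs disj by auto
  have le: "\<And>W. W \<in> borel_measurable M \<Longrightarrow> {\<omega>\<in>space M. W \<omega> \<le> y} \<in> events"
    using borel_measurable_le[OF _ borel_measurable_const] by blast
  have m: "S1 \<in> events" "S2 \<in> events" "S3 \<in> events" "S4 \<in> events"
    unfolding S1_def S2_def S3_def S4_def using C D E1 le W1 W2 W3 W4 by auto
  have d: "S1 \<inter> S2 = {}" "(S1 \<union> S2) \<inter> S3 = {}" "((S1 \<union> S2) \<union> S3) \<inter> S4 = {}"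
    unfolding S1_def S2_def S3_def S4_def using disj by auto
  have "prob (((S1 \<union> S2) \<union> S3) \<union> S4) = prob ((S1 \<union> S2) \<union> S3) + prob S4"
    using m d by (intro finite_measure_Union) auto
  also have "prob ((S1 \<union> S2) \<union> S3) = prob (S1 \<union> S2) + prob S3"
    using m d by (intro finite_measure_Union) auto
  also have "prob (S1 \<union> S2) = prob S1 + prob S2"
    using m d by (intro finite_measure_Union) auto
  finally show "prob {\<omega>\<in>space M. Z1 \<omega> \<le> y} = prob (C \<inter> {\<omega>\<in>space M. W1 \<omega> \<le> y}) + prob (D \<inter> {\<omega>\<in>space M. W2 \<omega> \<le> y})
       + prob (E1 \<inter> {\<omega>\<in>space M. W3 \<omega> \<le> y}) + prob ((space M - C - D - E1) \<inter> {\<omega>\<in>space M. W4 \<omega> \<le> y})"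
    unfolding eq S1_def S2_def S3_def S4_def .
qed

end

context prob_space
begin

lemma key:
  fixes Y Z :: "'a \<Rightarrow> real" and XX :: "('a \<Rightarrow> real) set"
  assumes na: "nonatomic M" and adm: "admissible_space M XX"
    and Yi: "integrable M Y" and XY: "\<forall>X\<in>XX. integrable M (\<lambda>\<omega>. X \<omega> * Y \<omega>)"
    and Z: "Z \<in> XX" and Znc: "\<not> (\<exists>c. AE \<omega> in M. Z \<omega> = c)" and Ync: "\<not> (\<exists>c. AE \<omega> in M. Y \<omega> = c)"
  shows "\<exists>Z1\<in>law_class M XX Z. \<exists>Z2\<in>law_class M XX Z. (\<integral>\<omega>. Z1 \<omega> * Y \<omega> \<partial>M) \<noteq> (\<integral>\<omega>. Z2 \<omega> * Y \<omega> \<partial>M)"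
proof -
  have li: "law_invariant M XX" and XXi: "\<forall>X\<in>XX. integrable M X"
    using adm unfolding admissible_space_def by auto
  have Zi: "integrable M Z" using XXi Z by auto
  have Zm: "Z \<in> borel_measurable M" and Ym: "Y \<in> borel_measurable M" using Zi Yi by auto
  define t where "t = expectation Y"
  define s where "s = expectation Z"
  define A where "A = {\<omega>\<in>space M. t < Y \<omega>}"
  define Ac where "Ac = {\<omega>\<in>space M. Y \<omega> \<le> t}"
  define L where "L = {\<omega>\<in>space M. Z \<omega> \<le> s}"
  define H where "H = {\<omega>\<in>space M. s < Z \<omega>}"
  have Aev: "A \<in> events" unfolding A_def using borel_measurable_less[OF borel_measurable_const Ym] by simp
  have Acev: "Ac \<in> events" unfolding Ac_def using borel_measurable_le[OF Ym borel_measurable_const] by simp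
  have Lev: "L \<in> events" unfolding L_def using borel_measurable_le[OF Zm borel_measurable_const] by simp
  have Hev: "H \<in> events" unfolding H_def using borel_measurable_less[OF borel_measurable_const Zm] by simp
  have pA: "0 < prob A" "0 < prob Ac" using nonconst_split[OF Yi Ync] unfolding A_def Ac_def t_def by auto
  have pL: "0 < prob L" "0 < prob H" using nonconst_split[OF Zi Znc] unfolding L_def H_def s_def by auto
  have AcA: "Ac = space M - A" unfolding A_def Ac_def by auto
  have HL: "H = space M - L" unfolding H_def L_def by auto
  have sumA: "prob Ac = 1 - prob A" unfolding AcA using Aev by (simp add: prob_compl)
  have sumL: "prob H = 1 - prob L" unfolding HL using Lev by (simp add: prob_compl)
  define p where "p = prob L"
  define r where "r = min (min (prob L) (prob H)) (min (prob A) (prob Ac))"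
  have r0: "0 < r" unfolding r_def using pA pL by simp
  have rle: "r \<le> prob A" "r \<le> prob Ac" "r \<le> p" "r \<le> 1 - p" unfolding r_def p_def using sumL by auto
  obtain C where C: "C \<in> events" "C \<subseteq> A" "prob C = r" using na_ivp[OF na Aev, of r] r0 rle by auto
  obtain D where D: "D \<in> events" "D \<subseteq> Ac" "prob D = r" using na_ivp[OF na Acev, of r] r0 rle by auto
  have CD: "C \<inter> D = {}" using C(2) D(2) unfolding A_def Ac_def by force
  define E where "E = space M - C - D"
  have Eev: "E \<in> events" unfolding E_def using C D by auto
  have pCD: "prob (C \<union> D) = 2 * r" using C D CD by (subst finite_measure_Union) auto
  have "E = space M - (C \<union> D)" unfolding E_def by auto
  then have pE: "prob E = 1 - 2 * r" using pCD C D by (simp add: prob_compl)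
  obtain E1 where E1: "E1 \<in> events" "E1 \<subseteq> E" "prob E1 = p - r"
    using na_ivp[OF na Eev, of "p - r"] rle pE by auto
  define E2 where "E2 = space M - C - D - E1"
  have E2E: "E2 = E - E1" unfolding E2_def E_def by auto
  have pE2: "prob E2 = 1 - p - r" unfolding E2E using E1 Eev pE by (simp add: finite_measure_Diff)
  have disj: "C \<inter> E1 = {}" "D \<inter> E1 = {}" using E1 unfolding E_def by auto
  define nl where "nl = distr (uniform_measure M L) borel Z"
  define nh where "nh = distr (uniform_measure M H) borel Z"
  have nlr: "real_distribution nl" and nlc: "\<And>y. p * cdf nl y = prob (L \<inter> {\<omega>\<in>space M. Z \<omega> \<le> y})"
    using cond_cdf[OF Lev pL(1) Zm] unfolding nl_def p_def by auto
  have nhr: "real_distribution nh" and nhc: "\<And>y. (1 - p) * cdf nh y = prob (H \<inter> {\<omega>\<in>space M. Z \<omega> \<le> y})"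
    using cond_cdf[OF Hev pL(2) Zm] sumL unfolding nh_def p_def by auto
  have nh0: "cdf nh s = 0"
  proof -
    have "H \<inter> {\<omega>\<in>space M. Z \<omega> \<le> s} = {}" unfolding H_def by auto
    then have "(1 - p) * cdf nh s = 0" using nhc[of s] by simp
    then show ?thesis using pL sumL unfolding p_def by simp
  qed
  have nl1: "cdf nl s = 1"
  proof -
    have "L \<inter> {\<omega>\<in>space M. Z \<omega> \<le> s} = L" unfolding L_def by auto
    then have "p * cdf nl s = p" using nlc[of s] unfolding p_def by simp
    then show ?thesis using pL unfolding p_def by simp
  qed
  obtain Whc where Whc: "Whc \<in> borel_measurable M" "\<And>y. prob (C \<inter> {\<omega>\<in>space M. Whc \<omega> \<le> y}) = prob C * cdf nh y"
    using realize[OF na C(1) nhr] by blast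
  obtain Wlc where Wlc: "Wlc \<in> borel_measurable M" "\<And>y. prob (C \<inter> {\<omega>\<in>space M. Wlc \<omega> \<le> y}) = prob C * cdf nl y"
    using realize[OF na C(1) nlr] by blast
  obtain Whd where Whd: "Whd \<in> borel_measurable M" "\<And>y. prob (D \<inter> {\<omega>\<in>space M. Whd \<omega> \<le> y}) = prob D * cdf nh y"
    using realize[OF na D(1) nhr] by blast
  obtain Wld where Wld: "Wld \<in> borel_measurable M" "\<And>y. prob (D \<inter> {\<omega>\<in>space M. Wld \<omega> \<le> y}) = prob D * cdf nl y"
    using realize[OF na D(1) nlr] by blast
  obtain W3 where W3: "W3 \<in> borel_measurable M" "\<And>y. prob (E1 \<inter> {\<omega>\<in>space M. W3 \<omega> \<le> y}) = prob E1 * cdf nl y"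
    using realize[OF na E1(1) nlr] by blast
  have E2ev: "E2 \<in> events" unfolding E2_def using C D E1 by auto
  obtain W4 where W4: "W4 \<in> borel_measurable M" "\<And>y. prob (E2 \<inter> {\<omega>\<in>space M. W4 \<omega> \<le> y}) = prob E2 * cdf nh y"
    using realize[OF na E2ev nhr] by blast
  define Z1 where "Z1 = (\<lambda>\<omega>. if \<omega> \<in> C then Whc \<omega> else if \<omega> \<in> D then Wld \<omega> else if \<omega> \<in> E1 then W3 \<omega> else W4 \<omega>)"
  define Z2 where "Z2 = (\<lambda>\<omega>. if \<omega> \<in> C then Wlc \<omega> else if \<omega> \<in> D then Whd \<omega> else if \<omega> \<in> E1 then W3 \<omega> else W4 \<omega>)"
  have P1: "Z1 \<in> borel_measurable M" "prob {\<omega>\<in>space M. Z1 \<omega> \<le> y} = prob (C \<inter> {\<omega>\<in>space M. Whc \<omega> \<le> y})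
     + prob (D \<inter> {\<omega>\<in>space M. Wld \<omega> \<le> y}) + prob (E1 \<inter> {\<omega>\<in>space M. W3 \<omega> \<le> y})
     + prob (E2 \<inter> {\<omega>\<in>space M. W4 \<omega> \<le> y})" for y
    unfolding Z1_def E2_def by (rule piece4[OF C(1) D(1) E1(1) CD disj Whc(1) Wld(1) W3(1) W4(1)])+
  have P2: "Z2 \<in> borel_measurable M" "prob {\<omega>\<in>space M. Z2 \<omega> \<le> y} = prob (C \<inter> {\<omega>\<in>space M. Wlc \<omega> \<le> y})
     + prob (D \<inter> {\<omega>\<in>space M. Whd \<omega> \<le> y}) + prob (E1 \<inter> {\<omega>\<in>space M. W3 \<omega> \<le> y})
     + prob (E2 \<inter> {\<omega>\<in>space M. W4 \<omega> \<le> y})" for y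
    unfolding Z2_def E2_def by (rule piece4[OF C(1) D(1) E1(1) CD disj Wlc(1) Whd(1) W3(1) W4(1)])+
  have cdfZ: "prob {\<omega>\<in>space M. Z \<omega> \<le> y} = p * cdf nl y + (1 - p) * cdf nh y" for y
  proof -
    have "{\<omega>\<in>space M. Z \<omega> \<le> y} = (L \<inter> {\<omega>\<in>space M. Z \<omega> \<le> y}) \<union> (H \<inter> {\<omega>\<in>space M. Z \<omega> \<le> y})"
      unfolding L_def H_def by auto
    moreover have "prob ((L \<inter> {\<omega>\<in>space M. Z \<omega> \<le> y}) \<union> (H \<inter> {\<omega>\<in>space M. Z \<omega> \<le> y}))
       = prob (L \<inter> {\<omega>\<in>space M. Z \<omega> \<le> y}) + prob (H \<inter> {\<omega>\<in>space M. Z \<omega> \<le> y})"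
      using Lev Hev borel_measurable_le[OF Zm borel_measurable_const, of y]
      by (intro finite_measure_Union) (auto simp: L_def H_def)
    ultimately show ?thesis using nlc nhc by simp
  qed
  have cdf1: "prob {\<omega>\<in>space M. Z1 \<omega> \<le> y} = prob {\<omega>\<in>space M. Z \<omega> \<le> y}" for y
    unfolding P1(2) cdfZ Whc(2) Wld(2) W3(2) W4(2) C(3) D(3) E1(3) pE2 by (simp add: algebra_simps)
  have cdf2: "prob {\<omega>\<in>space M. Z2 \<omega> \<le> y} = prob {\<omega>\<in>space M. Z \<omega> \<le> y}" for y
    unfolding P2(2) cdfZ Wlc(2) Whd(2) W3(2) W4(2) C(3) D(3) E1(3) pE2 by (simp add: algebra_simps)
  have law: "distr M borel Zi = distr M borel Z" if Zim: "Zi \<in> borel_measurable M"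
    and c: "\<And>y. prob {\<omega>\<in>space M. Zi \<omega> \<le> y} = prob {\<omega>\<in>space M. Z \<omega> \<le> y}" for Zi
    by (rule cdf_unique[OF real_distribution_distr[OF Zim] real_distribution_distr[OF Zm]])
      (simp add: fun_eq_iff cdf_distr_eq[OF Zim] cdf_distr_eq[OF Zm] c)
  have law1: "distr M borel Z1 = distr M borel Z" by (rule law[OF P1(1) cdf1])
  have law2: "distr M borel Z2 = distr M borel Z" by (rule law[OF P2(1) cdf2])
  have Z1X: "Z1 \<in> XX" using li P1(1) Z law1 unfolding law_invariant_def by blast
  have Z2X: "Z2 \<in> XX" using li P2(1) Z law2 unfolding law_invariant_def by blast
  have Z1L: "Z1 \<in> law_class M XX Z" using Z1X law1 unfolding law_class_def by auto
  have Z2L: "Z2 \<in> law_class M XX Z" using Z2X law2 unfolding law_class_def by auto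
  have int_eq: "integral\<^sup>L M Zi = integral\<^sup>L M Z" if Zim: "Zi \<in> borel_measurable M"
    and l: "distr M borel Zi = distr M borel Z" for Zi
  proof -
    have "integral\<^sup>L M Zi = integral\<^sup>L (distr M borel Zi) (\<lambda>x. x)"
      using integral_distr[OF Zim, of "\<lambda>x. x"] by simp
    also have "\<dots> = integral\<^sup>L M Z" unfolding l using integral_distr[OF Zm, of "\<lambda>x. x"] by simp
    finally show ?thesis .
  qed
  have I1: "integral\<^sup>L M Z1 = integral\<^sup>L M Z2"
    using int_eq[OF P1(1) law1] int_eq[OF P2(1) law2] by simp
  define h where "h = (\<lambda>\<omega>. (Z1 \<omega> - Z2 \<omega>) * (Y \<omega> - t))"
  have i1: "integrable M (\<lambda>\<omega>. Z1 \<omega> * Y \<omega>)" "integrable M (\<lambda>\<omega>. Z2 \<omega> * Y \<omega>)"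
    using XY Z1X Z2X by auto
  have i3: "integrable M Z1" "integrable M Z2" using XXi Z1X Z2X by auto
  have heq: "h = (\<lambda>\<omega>. (Z1 \<omega> * Y \<omega> - Z2 \<omega> * Y \<omega>) - (t * Z1 \<omega> - t * Z2 \<omega>))"
    unfolding h_def by (auto simp: algebra_simps)
  have ia: "integrable M (\<lambda>\<omega>. Z1 \<omega> * Y \<omega> - Z2 \<omega> * Y \<omega>)" using i1 by auto
  have ib: "integrable M (\<lambda>\<omega>. t * Z1 \<omega> - t * Z2 \<omega>)" using i3 by auto
  have hi: "integrable M h" unfolding heq using ia ib by auto
  have hint: "integral\<^sup>L M h = (\<integral>\<omega>. Z1 \<omega> * Y \<omega> \<partial>M) - (\<integral>\<omega>. Z2 \<omega> * Y \<omega> \<partial>M) - (t * integral\<^sup>L M Z1 - t * integral\<^sup>L M Z2)"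
    unfolding heq using i1 i3 by (simp add: Bochner_Integration.integral_diff[OF ia ib] Bochner_Integration.integral_diff)
  have AEh: "AE \<omega> in M. 0 \<le> h \<omega> \<and> (\<omega> \<in> C \<longrightarrow> 0 < h \<omega>)"
  proof -
    have a1: "AE \<omega> in M. \<omega> \<in> C \<longrightarrow> s < Whc \<omega>" using Whc nh0 by (intro AE_from_zero[OF C(1)]) auto
    have a2: "AE \<omega> in M. \<omega> \<in> C \<longrightarrow> Wlc \<omega> \<le> s" using Wlc nl1 by (intro AE_from_full[OF C(1)]) auto
    have a3: "AE \<omega> in M. \<omega> \<in> D \<longrightarrow> s < Whd \<omega>" using Whd nh0 by (intro AE_from_zero[OF D(1)]) auto
    have a4: "AE \<omega> in M. \<omega> \<in> D \<longrightarrow> Wld \<omega> \<le> s" using Wld nl1 by (intro AE_from_full[OF D(1)]) auto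
    show ?thesis using a1 a2 a3 a4
    proof eventually_elim
      case (elim \<omega>)
      show ?case
      proof (cases "\<omega> \<in> C")
        case True
        then have "t < Y \<omega>" using C(2) unfolding A_def by auto
        moreover have "Z1 \<omega> = Whc \<omega>" "Z2 \<omega> = Wlc \<omega>" using True unfolding Z1_def Z2_def by auto
        moreover have "Wlc \<omega> < Whc \<omega>" using elim True by auto
        ultimately have "0 < h \<omega>" unfolding h_def by (simp add: mult_pos_pos)
        then show ?thesis by simp
      next
        case nC: False
        show ?thesis
        proof (cases "\<omega> \<in> D")
          case True
          then have "Y \<omega> \<le> t" using D(2) unfolding Ac_def by auto
          moreover have "Z1 \<omega> = Wld \<omega>" "Z2 \<omega> = Whd \<omega>" using True nC unfolding Z1_def Z2_def by auto
          moreover have "Wld \<omega> < Whd \<omega>" using elim True by auto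
          ultimately have "0 \<le> h \<omega>" unfolding h_def by (simp add: mult_nonpos_nonpos)
          then show ?thesis using nC by simp
        next
          case False
          then have "Z1 \<omega> = Z2 \<omega>" using nC unfolding Z1_def Z2_def by auto
          then show ?thesis using nC unfolding h_def by simp
        qed
      qed
    qed
  qed
  have hpos: "0 < integral\<^sup>L M h"
  proof -
    have nn: "AE \<omega> in M. 0 \<le> h \<omega>" using AEh by eventually_elim simp
    have ge: "0 \<le> integral\<^sup>L M h" by (rule integral_nonneg_AE[OF nn])
    have "integral\<^sup>L M h \<noteq> 0"
    proof
      assume "integral\<^sup>L M h = 0"
      then have "AE \<omega> in M. h \<omega> = 0" using integral_nonneg_eq_0_iff_AE[OF hi nn] by simp
      with AEh have ae: "AE \<omega> in M. \<omega> \<notin> C" by eventually_elim auto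
      have Cs: "C \<subseteq> space M" using C(1) sets.sets_into_space by auto
      have "{\<omega>\<in>space M. \<not> \<omega> \<notin> C} = C" using Cs by auto
      then have "emeasure M C = 0" using ae AE_iff_measurable[OF C(1), of "\<lambda>\<omega>. \<omega> \<notin> C"] by simp
      then have "prob C = 0" by (simp add: emeasure_eq_measure)
      then show False using C(3) r0 by simp
    qed
    then show ?thesis using ge by simp
  qed
  have "(\<integral>\<omega>. Z1 \<omega> * Y \<omega> \<partial>M) \<noteq> (\<integral>\<omega>. Z2 \<omega> * Y \<omega> \<partial>M)"
    using hpos hint I1 by simp
  then show ?thesis using Z1L Z2L by blast
qed

end

lemma sum_lessThan_add_split:
  fixes f :: "nat \<Rightarrow> 'b::comm_monoid_add"
  shows "(\<Sum>i<n + m. f i) = (\<Sum>i<n. f i) + (\<Sum>i<m. f (n + i))"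
  by (induction m) (simp_all add: add.assoc)

lemma fun_span_zero: "(\<lambda>_. 0) \<in> fun_span A"
  unfolding fun_span_def by (intro CollectI exI[of _ 0]) auto

lemma fun_span_base: "a \<in> A \<Longrightarrow> a \<in> fun_span A"
  unfolding fun_span_def by (intro CollectI exI[of _ 1] exI[of _ "\<lambda>_. 1"] exI[of _ "\<lambda>_. a"]) auto

lemma fun_span_scale: "X \<in> fun_span A \<Longrightarrow> (\<lambda>\<omega>. k * X \<omega>) \<in> fun_span A"
proof -
  assume "X \<in> fun_span A"
  then have "\<exists>n::nat. \<exists>c g. (\<forall>i<n. g i \<in> A) \<and> X = (\<lambda>\<omega>. \<Sum>i<n. c i * g i \<omega>)"
    unfolding fun_span_def by simp
  then obtain n :: nat and c g where g: "\<forall>i<n. g i \<in> A" and f: "X = (\<lambda>\<omega>. \<Sum>i<n. c i * g i \<omega>)"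
    by (elim exE conjE)
  have e: "(\<lambda>\<omega>. k * X \<omega>) = (\<lambda>\<omega>. \<Sum>i<n. (k * c i) * g i \<omega>)" unfolding f
    by (simp add: sum_distrib_left mult.assoc)
  show ?thesis unfolding fun_span_def
    by (intro CollectI exI[of _ n] exI[of _ "\<lambda>i. k * c i"] exI[of _ g] conjI g e)
qed

lemma fun_span_add: "X \<in> fun_span A \<Longrightarrow> W \<in> fun_span A \<Longrightarrow> (\<lambda>\<omega>. X \<omega> + W \<omega>) \<in> fun_span A"
proof -
  assume "X \<in> fun_span A" "W \<in> fun_span A"
  then have "\<exists>n::nat. \<exists>c g. (\<forall>i<n. g i \<in> A) \<and> X = (\<lambda>\<omega>. \<Sum>i<n. c i * g i \<omega>)"
     "\<exists>n::nat. \<exists>c g. (\<forall>i<n. g i \<in> A) \<and> W = (\<lambda>\<omega>. \<Sum>i<n. c i * g i \<omega>)"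
    unfolding fun_span_def by simp_all
  then obtain n m :: nat and c g c' g' where g: "\<forall>i<n. g i \<in> A" and f: "X = (\<lambda>\<omega>. \<Sum>i<n. c i * g i \<omega>)"
    and g': "\<forall>i<m. g' i \<in> A" and f': "W = (\<lambda>\<omega>. \<Sum>i<m. c' i * g' i \<omega>)"
    by (elim exE conjE)
  define c'' where "c'' i = (if i < n then c i else c' (i - n))" for i
  define g'' where "g'' i = (if i < n then g i else g' (i - n))" for i
  have s1: "(\<Sum>i<n. c'' i * g'' i \<omega>) = (\<Sum>i<n. c i * g i \<omega>)" for \<omega>
    by (rule sum.cong) (auto simp: c''_def g''_def)
  have s2: "(\<Sum>i<m. c'' (n + i) * g'' (n + i) \<omega>) = (\<Sum>i<m. c' i * g' i \<omega>)" for \<omega>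
    by (rule sum.cong) (auto simp: c''_def g''_def)
  have e: "(\<lambda>\<omega>. X \<omega> + W \<omega>) = (\<lambda>\<omega>. \<Sum>i<n + m. c'' i * g'' i \<omega>)"
    unfolding f f' sum_lessThan_add_split s1 s2 ..
  have gg: "\<forall>i<n + m. g'' i \<in> A" using g g' unfolding g''_def by auto
  show ?thesis unfolding fun_span_def
    by (intro CollectI exI[of _ "n + m"] exI[of _ c''] exI[of _ g''] conjI gg e)
qed

lemma fun_span_sub:
  assumes A: "A \<subseteq> G" and z: "(\<lambda>_. 0) \<in> G" and ad: "\<forall>X\<in>G. \<forall>W\<in>G. (\<lambda>\<omega>. X \<omega> + W \<omega>) \<in> G"
    and sc: "\<forall>c. \<forall>X\<in>G. (\<lambda>\<omega>. c * X \<omega>) \<in> G"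
  shows "fun_span A \<subseteq> G"
proof
  fix f assume "f \<in> fun_span A"
  then have "\<exists>n::nat. \<exists>c g. (\<forall>i<n. g i \<in> A) \<and> f = (\<lambda>\<omega>. \<Sum>i<n. c i * g i \<omega>)"
    unfolding fun_span_def by simp
  then obtain n :: nat and c g where g: "\<forall>i<n. g i \<in> A" and f: "f = (\<lambda>\<omega>. \<Sum>i<n. c i * g i \<omega>)"
    by (elim exE conjE)
  have "(\<lambda>\<omega>. \<Sum>i<m. c i * g i \<omega>) \<in> G" if "m \<le> n" for m
    using that
  proof (induction m)
    case 0 then show ?case using z by simp
  next
    case (Suc m)
    then have h1: "(\<lambda>\<omega>. \<Sum>i<m. c i * g i \<omega>) \<in> G" by simp
    have "g m \<in> G" using g A Suc.prems by auto
    then have h2: "(\<lambda>\<omega>. c m * g m \<omega>) \<in> G" using sc by blast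
    have "(\<lambda>\<omega>. (\<Sum>i<m. c i * g i \<omega>) + c m * g m \<omega>) \<in> G" using ad[rule_format, OF h1 h2] by simp
    then show ?case by simp
  qed
  then show "f \<in> G" using f by simp
qed

lemma interp:
  fixes \<phi> :: "('a \<Rightarrow> real) \<Rightarrow> ('a \<Rightarrow> real) \<Rightarrow> real"
    and XX XXd :: "('a \<Rightarrow> real) set" and Ys :: "nat \<Rightarrow> 'a \<Rightarrow> real"
  assumes lin1: "\<And>Y X W. Y \<in> XXd \<Longrightarrow> X \<in> XX \<Longrightarrow> W \<in> XX \<Longrightarrow> \<phi> Y (\<lambda>\<omega>. X \<omega> + W \<omega>) = \<phi> Y X + \<phi> Y W"
    and lin2: "\<And>Y X c. Y \<in> XXd \<Longrightarrow> X \<in> XX \<Longrightarrow> \<phi> Y (\<lambda>\<omega>. c * X \<omega>) = c * \<phi> Y X"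
    and lin3: "\<And>Y Y' X c. Y \<in> XXd \<Longrightarrow> Y' \<in> XXd \<Longrightarrow> X \<in> XX \<Longrightarrow> \<phi> (\<lambda>\<omega>. Y \<omega> - c * Y' \<omega>) X = \<phi> Y X - c * \<phi> Y' X"
    and d3: "\<And>Y Y' c. Y \<in> XXd \<Longrightarrow> Y' \<in> XXd \<Longrightarrow> (\<lambda>\<omega>. Y \<omega> - c * Y' \<omega>) \<in> XXd"
    and Ys: "\<And>i. Ys i \<in> XXd"
  shows "S \<subseteq> G \<Longrightarrow> G \<subseteq> XX \<Longrightarrow> (\<lambda>_. 0) \<in> S
    \<Longrightarrow> (\<And>X W. X \<in> S \<Longrightarrow> W \<in> S \<Longrightarrow> (\<lambda>\<omega>. X \<omega> + W \<omega>) \<in> S) \<Longrightarrow> (\<And>c X. X \<in> S \<Longrightarrow> (\<lambda>\<omega>. c * X \<omega>) \<in> S)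
    \<Longrightarrow> (\<And>X W. X \<in> G \<Longrightarrow> W \<in> G \<Longrightarrow> (\<lambda>\<omega>. X \<omega> + W \<omega>) \<in> G) \<Longrightarrow> (\<And>c X. X \<in> G \<Longrightarrow> (\<lambda>\<omega>. c * X \<omega>) \<in> G)
    \<Longrightarrow> (\<And>Y. Y \<in> XXd \<Longrightarrow> (\<forall>W\<in>S. \<phi> Y W = 0) \<Longrightarrow> (\<forall>X\<in>G. \<phi> Y X = 0))
    \<Longrightarrow> \<forall>X\<in>G. \<exists>W\<in>S. \<forall>i<n. \<phi> (Ys i) W = \<phi> (Ys i) X"
proof (induction n arbitrary: S G)
  case 0
  then show ?case by blast
next
  case (Suc n)
  note SG = Suc.prems(1) and GX = Suc.prems(2) and S0 = Suc.prems(3) and Sadd = Suc.prems(4)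
    and Ssc = Suc.prems(5) and Gadd = Suc.prems(6) and Gsc = Suc.prems(7) and K = Suc.prems(8)
  define Yn where "Yn = Ys n"
  have Yn: "Yn \<in> XXd" using Ys unfolding Yn_def by auto
  define S' where "S' = {W\<in>S. \<phi> Yn W = 0}"
  define G' where "G' = {X\<in>G. \<phi> Yn X = 0}"
  have SX: "\<And>X. X \<in> S \<Longrightarrow> X \<in> XX" using SG GX by auto
  have GX': "\<And>X. X \<in> G \<Longrightarrow> X \<in> XX" using GX by auto
  have K': "\<forall>X\<in>G'. \<phi> Y X = 0" if Y: "Y \<in> XXd" and h: "\<forall>W\<in>S'. \<phi> Y W = 0" for Y
  proof
    fix X assume X: "X \<in> G'"
    then have XG: "X \<in> G" and XYn: "\<phi> Yn X = 0" unfolding G'_def by auto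
    show "\<phi> Y X = 0"
    proof (cases "\<exists>w\<in>S. \<phi> Yn w \<noteq> 0")
      case True
      then obtain w where w: "w \<in> S" "\<phi> Yn w \<noteq> 0" by auto
      define c where "c = \<phi> Y w / \<phi> Yn w"
      have "\<forall>s\<in>S. \<phi> (\<lambda>\<omega>. Y \<omega> - c * Yn \<omega>) s = 0"
      proof
        fix s assume s: "s \<in> S"
        define k where "k = \<phi> Yn s / \<phi> Yn w"
        define s' where "s' = (\<lambda>\<omega>. s \<omega> + (- k) * w \<omega>)"
        have kw: "(\<lambda>\<omega>. (- k) * w \<omega>) \<in> S" by (rule Ssc[OF w(1)])
        have s'S: "s' \<in> S" unfolding s'_def by (rule Sadd[OF s kw])
        have ph: "\<phi> Z s' = \<phi> Z s - k * \<phi> Z w" if Z: "Z \<in> XXd" for Z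
        proof -
          have "\<phi> Z s' = \<phi> Z s + \<phi> Z (\<lambda>\<omega>. (- k) * w \<omega>)"
            unfolding s'_def by (rule lin1[OF Z SX[OF s] SX[OF kw]])
          also have "\<phi> Z (\<lambda>\<omega>. (- k) * w \<omega>) = (- k) * \<phi> Z w"
            by (rule lin2[OF Z SX[OF w(1)]])
          finally show ?thesis by simp
        qed
        have "\<phi> Yn s' = 0" using ph[OF Yn] w unfolding k_def by simp
        then have "s' \<in> S'" using s'S unfolding S'_def by auto
        then have "\<phi> Y s' = 0" using h by auto
        then have "\<phi> Y s = k * \<phi> Y w" using ph[OF Y] by simp
        then have "\<phi> Y s = c * \<phi> Yn s" unfolding k_def c_def using w by simp
        then show "\<phi> (\<lambda>\<omega>. Y \<omega> - c * Yn \<omega>) s = 0" using lin3[OF Y Yn SX[OF s], of c] by simp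
      qed
      then have "\<forall>X\<in>G. \<phi> (\<lambda>\<omega>. Y \<omega> - c * Yn \<omega>) X = 0" by (rule K[OF d3[OF Y Yn]])
      then have "\<phi> (\<lambda>\<omega>. Y \<omega> - c * Yn \<omega>) X = 0" using XG by auto
      then show ?thesis using lin3[OF Y Yn GX'[OF XG], of c] XYn by simp
    next
      case False
      then have "\<forall>W\<in>S. \<phi> Y W = 0" using h unfolding S'_def by auto
      then show ?thesis using K[OF Y] XG by auto
    qed
  qed
  have IH: "\<forall>X\<in>G'. \<exists>W\<in>S'. \<forall>i<n. \<phi> (Ys i) W = \<phi> (Ys i) X"
  proof (rule Suc.IH)
    show "S' \<subseteq> G'" using SG unfolding S'_def G'_def by auto
    show "G' \<subseteq> XX" using GX unfolding G'_def by auto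
    have "\<phi> Yn (\<lambda>\<omega>. 0 * (\<lambda>_. 0) \<omega>) = 0 * \<phi> Yn (\<lambda>_. 0)" by (rule lin2[OF Yn SX[OF S0]])
    then show "(\<lambda>_. 0) \<in> S'" using S0 unfolding S'_def by simp
    show "(\<lambda>\<omega>. X \<omega> + W \<omega>) \<in> S'" if "X \<in> S'" "W \<in> S'" for X W
      using that Sadd lin1[OF Yn SX SX, of X W] unfolding S'_def by auto
    show "(\<lambda>\<omega>. c * X \<omega>) \<in> S'" if "X \<in> S'" for c X
      using that Ssc lin2[OF Yn SX, of X c] unfolding S'_def by auto
    show "(\<lambda>\<omega>. X \<omega> + W \<omega>) \<in> G'" if "X \<in> G'" "W \<in> G'" for X W
      using that Gadd lin1[OF Yn GX' GX', of X W] unfolding G'_def by auto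
    show "(\<lambda>\<omega>. c * X \<omega>) \<in> G'" if "X \<in> G'" for c X
      using that Gsc lin2[OF Yn GX', of X c] unfolding G'_def by auto
    show "\<forall>X\<in>G'. \<phi> Y X = 0" if "Y \<in> XXd" "\<forall>W\<in>S'. \<phi> Y W = 0" for Y
      by (rule K'[OF that])
  qed
  show ?case
  proof
    fix X assume X: "X \<in> G"
    have "\<exists>W0\<in>S. \<phi> Yn W0 = \<phi> Yn X"
    proof (cases "\<exists>w\<in>S. \<phi> Yn w \<noteq> 0")
      case True
      then obtain w where w: "w \<in> S" "\<phi> Yn w \<noteq> 0" by auto
      have "(\<lambda>\<omega>. (\<phi> Yn X / \<phi> Yn w) * w \<omega>) \<in> S" by (rule Ssc[OF w(1)])
      moreover have "\<phi> Yn (\<lambda>\<omega>. (\<phi> Yn X / \<phi> Yn w) * w \<omega>) = \<phi> Yn X"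
        using lin2[OF Yn SX[OF w(1)], of "\<phi> Yn X / \<phi> Yn w"] w by simp
      ultimately show ?thesis by blast
    next
      case False
      then have "\<phi> Yn X = 0" using K[OF Yn] X by auto
      moreover have "\<phi> Yn (\<lambda>\<omega>. 0 * (\<lambda>_. 0) \<omega>) = 0 * \<phi> Yn (\<lambda>_. 0)" by (rule lin2[OF Yn SX[OF S0]])
      ultimately show ?thesis using S0 by auto
    qed
    then obtain W0 where W0: "W0 \<in> S" "\<phi> Yn W0 = \<phi> Yn X" by blast
    define R where "R = (\<lambda>\<omega>. X \<omega> + (-1) * W0 \<omega>)"
    have W0G: "W0 \<in> G" using SG W0(1) by auto
    have mW0: "(\<lambda>\<omega>. (-1) * W0 \<omega>) \<in> G" by (rule Gsc[OF W0G])
    have RG: "R \<in> G" unfolding R_def by (rule Gadd[OF X mW0])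
    have phR: "\<phi> Z R = \<phi> Z X - \<phi> Z W0" if Z: "Z \<in> XXd" for Z
    proof -
      have "\<phi> Z R = \<phi> Z X + \<phi> Z (\<lambda>\<omega>. (-1) * W0 \<omega>)" unfolding R_def
        by (rule lin1[OF Z GX'[OF X] GX'[OF mW0]])
      also have "\<phi> Z (\<lambda>\<omega>. (-1) * W0 \<omega>) = (-1) * \<phi> Z W0" by (rule lin2[OF Z SX[OF W0(1)]])
      finally show ?thesis by simp
    qed
    have "R \<in> G'" using RG phR[OF Yn] W0 unfolding G'_def by auto
    then obtain W1 where W1: "W1 \<in> S'" "\<forall>i<n. \<phi> (Ys i) W1 = \<phi> (Ys i) R" using IH by blast
    define W where "W = (\<lambda>\<omega>. W0 \<omega> + W1 \<omega>)"
    have W1S: "W1 \<in> S" using W1 unfolding S'_def by auto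
    have WS: "W \<in> S" unfolding W_def by (rule Sadd[OF W0(1) W1S])
    have phW: "\<phi> Z W = \<phi> Z W0 + \<phi> Z W1" if "Z \<in> XXd" for Z
      unfolding W_def by (rule lin1[OF that SX[OF W0(1)] SX[OF W1S]])
    have "\<forall>i<Suc n. \<phi> (Ys i) W = \<phi> (Ys i) X"
    proof (intro allI impI)
      fix i assume i: "i < Suc n"
      show "\<phi> (Ys i) W = \<phi> (Ys i) X"
      proof (cases "i < n")
        case True
        then show ?thesis using phW[OF Ys] phR[OF Ys] W1 by auto
      next
        case False
        then have "i = n" using i by auto
        moreover have "\<phi> Yn W1 = 0" using W1 unfolding S'_def by auto
        ultimately show ?thesis using phW[OF Yn] W0 unfolding Yn_def by auto
      qed
    qed
    then show "\<exists>W\<in>S. \<forall>i<Suc n. \<phi> (Ys i) W = \<phi> (Ys i) X" using WS by blast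
  qed
qed

lemma nbhd:
  fixes M :: "'a measure" and XX XXd :: "('a \<Rightarrow> real) set"
  assumes d0: "(\<lambda>_. 0) \<in> XXd" and op: "openin (weak_top M XX XXd) T"
  shows "\<forall>X\<in>T. \<exists>(n::nat) Ys e. 0 < e \<and> (\<forall>i. Ys i \<in> XXd) \<and>
     {W\<in>XX. \<forall>i<n. \<bar>(\<integral>\<omega>. W \<omega> * Ys i \<omega> \<partial>M) - (\<integral>\<omega>. X \<omega> * Ys i \<omega> \<partial>M)\<bar> < e} \<subseteq> T"
proof -
  have g: "generate_topology_on {{X\<in>XX. (\<integral>\<omega>. X \<omega> * Y \<omega> \<partial>M) \<in> U} | Y U. Y \<in> XXd \<and> open U} T"
    using op unfolding weak_top_def openin_topology_generated_by_iff .
  then show ?thesis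
  proof (induction rule: generate_topology_on.induct)
    case Empty
    then show ?case by simp
  next
    case (Int a b)
    show ?case
    proof
      fix X assume X: "X \<in> a \<inter> b"
      obtain n1 :: nat and Y1 e1 where 1: "0 < e1" "\<forall>i. Y1 i \<in> XXd"
        "{W\<in>XX. \<forall>i<n1. \<bar>(\<integral>\<omega>. W \<omega> * Y1 i \<omega> \<partial>M) - (\<integral>\<omega>. X \<omega> * Y1 i \<omega> \<partial>M)\<bar> < e1} \<subseteq> a"
        using Int.IH(1) X by blast
      obtain n2 :: nat and Y2 e2 where 2: "0 < e2" "\<forall>i. Y2 i \<in> XXd"
        "{W\<in>XX. \<forall>i<n2. \<bar>(\<integral>\<omega>. W \<omega> * Y2 i \<omega> \<partial>M) - (\<integral>\<omega>. X \<omega> * Y2 i \<omega> \<partial>M)\<bar> < e2} \<subseteq> b"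
        using Int.IH(2) X by blast
      define Ys where "Ys i = (if i < n1 then Y1 i else Y2 (i - n1))" for i
      have Ys: "\<forall>i. Ys i \<in> XXd" using 1 2 unfolding Ys_def by auto
      have sub: "{W\<in>XX. \<forall>i<n1 + n2. \<bar>(\<integral>\<omega>. W \<omega> * Ys i \<omega> \<partial>M) - (\<integral>\<omega>. X \<omega> * Ys i \<omega> \<partial>M)\<bar> < min e1 e2}
          \<subseteq> a \<inter> b"
      proof
        fix W assume W: "W \<in> {W\<in>XX. \<forall>i<n1 + n2. \<bar>(\<integral>\<omega>. W \<omega> * Ys i \<omega> \<partial>M) - (\<integral>\<omega>. X \<omega> * Ys i \<omega> \<partial>M)\<bar> < min e1 e2}"
        have "\<forall>i<n1. \<bar>(\<integral>\<omega>. W \<omega> * Y1 i \<omega> \<partial>M) - (\<integral>\<omega>. X \<omega> * Y1 i \<omega> \<partial>M)\<bar> < e1"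
        proof (intro allI impI)
          fix i assume i: "i < n1"
          then have "\<bar>(\<integral>\<omega>. W \<omega> * Ys i \<omega> \<partial>M) - (\<integral>\<omega>. X \<omega> * Ys i \<omega> \<partial>M)\<bar> < min e1 e2" using W by auto
          then show "\<bar>(\<integral>\<omega>. W \<omega> * Y1 i \<omega> \<partial>M) - (\<integral>\<omega>. X \<omega> * Y1 i \<omega> \<partial>M)\<bar> < e1"
            using i unfolding Ys_def by auto
        qed
        moreover have "\<forall>i<n2. \<bar>(\<integral>\<omega>. W \<omega> * Y2 i \<omega> \<partial>M) - (\<integral>\<omega>. X \<omega> * Y2 i \<omega> \<partial>M)\<bar> < e2"
        proof (intro allI impI)
          fix i assume i: "i < n2"
          then have "\<bar>(\<integral>\<omega>. W \<omega> * Ys (n1 + i) \<omega> \<partial>M) - (\<integral>\<omega>. X \<omega> * Ys (n1 + i) \<omega> \<partial>M)\<bar> < min e1 e2"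
            using W by auto
          then show "\<bar>(\<integral>\<omega>. W \<omega> * Y2 i \<omega> \<partial>M) - (\<integral>\<omega>. X \<omega> * Y2 i \<omega> \<partial>M)\<bar> < e2"
            unfolding Ys_def by auto
        qed
        ultimately show "W \<in> a \<inter> b" using W 1 2 by blast
      qed
      show "\<exists>(n::nat) Ys e. 0 < e \<and> (\<forall>i. Ys i \<in> XXd) \<and>
         {W\<in>XX. \<forall>i<n. \<bar>(\<integral>\<omega>. W \<omega> * Ys i \<omega> \<partial>M) - (\<integral>\<omega>. X \<omega> * Ys i \<omega> \<partial>M)\<bar> < e} \<subseteq> a \<inter> b"
        using sub Ys 1 2 by (intro exI[of _ "n1 + n2"] exI[of _ Ys] exI[of _ "min e1 e2"]) auto
    qed
  next
    case (UN K)
    show ?case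
    proof
      fix X assume "X \<in> \<Union>K"
      then obtain k where k: "k \<in> K" "X \<in> k" by auto
      then obtain n :: nat and Ys e where "0 < e" "\<forall>i. Ys i \<in> XXd"
        "{W\<in>XX. \<forall>i<n. \<bar>(\<integral>\<omega>. W \<omega> * Ys i \<omega> \<partial>M) - (\<integral>\<omega>. X \<omega> * Ys i \<omega> \<partial>M)\<bar> < e} \<subseteq> k"
        using UN.IH by blast
      then show "\<exists>(n::nat) Ys e. 0 < e \<and> (\<forall>i. Ys i \<in> XXd) \<and>
         {W\<in>XX. \<forall>i<n. \<bar>(\<integral>\<omega>. W \<omega> * Ys i \<omega> \<partial>M) - (\<integral>\<omega>. X \<omega> * Ys i \<omega> \<partial>M)\<bar> < e} \<subseteq> \<Union>K"
        using k by blast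
    qed
  next
    case (Basis s)
    then obtain Y U where s: "s = {X\<in>XX. (\<integral>\<omega>. X \<omega> * Y \<omega> \<partial>M) \<in> U}" and Y: "Y \<in> XXd" and U: "open U"
      by blast
    show ?case
    proof
      fix X assume X: "X \<in> s"
      then have "(\<integral>\<omega>. X \<omega> * Y \<omega> \<partial>M) \<in> U" using s by auto
      then obtain e where e: "0 < e" "\<And>y. dist y (\<integral>\<omega>. X \<omega> * Y \<omega> \<partial>M) < e \<Longrightarrow> y \<in> U"
        using U unfolding open_dist by blast
      have "{W\<in>XX. \<forall>i<(1::nat). \<bar>(\<integral>\<omega>. W \<omega> * (\<lambda>_. Y) i \<omega> \<partial>M) - (\<integral>\<omega>. X \<omega> * (\<lambda>_. Y) i \<omega> \<partial>M)\<bar> < e} \<subseteq> s"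
        using e(2) unfolding s by (auto simp: dist_real_def)
      then show "\<exists>(n::nat) Ys e. 0 < e \<and> (\<forall>i. Ys i \<in> XXd) \<and>
         {W\<in>XX. \<forall>i<n. \<bar>(\<integral>\<omega>. W \<omega> * Ys i \<omega> \<partial>M) - (\<integral>\<omega>. X \<omega> * Ys i \<omega> \<partial>M)\<bar> < e} \<subseteq> s"
        using e(1) Y by (intro exI[of _ "1::nat"] exI[of _ "\<lambda>_. Y"] exI[of _ e]) auto
    qed
  qed
qed

lemma topspace_weak:
  assumes d0: "(\<lambda>_. 0) \<in> XXd"
  shows "topspace (weak_top M XX XXd) = XX"
proof -
  have "XX \<subseteq> \<Union>{{X\<in>XX. (\<integral>\<omega>. X \<omega> * Y \<omega> \<partial>M) \<in> U} | Y U. Y \<in> XXd \<and> open U}"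
  proof
    fix X assume "X \<in> XX"
    then have "X \<in> {X\<in>XX. (\<integral>\<omega>. X \<omega> * (\<lambda>_. 0) \<omega> \<partial>M) \<in> UNIV}" by simp
    then show "X \<in> \<Union>{{X\<in>XX. (\<integral>\<omega>. X \<omega> * Y \<omega> \<partial>M) \<in> U} | Y U. Y \<in> XXd \<and> open U}"
      using d0 by blast
  qed
  then show ?thesis unfolding weak_top_def topology_generated_by_topspace by blast
qed

lemma (in prob_space) int_eq_law:
  fixes Z Zi :: "'a \<Rightarrow> real"
  assumes Zim: "Zi \<in> borel_measurable M" and Zm: "Z \<in> borel_measurable M"
    and l: "distr M borel Zi = distr M borel Z"
  shows "integral\<^sup>L M Zi = integral\<^sup>L M Z"
proof -
  have "integral\<^sup>L M Zi = integral\<^sup>L (distr M borel Zi) (\<lambda>x. x)"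
    using integral_distr[OF Zim, of "\<lambda>x. x"] by simp
  also have "\<dots> = integral\<^sup>L M Z" unfolding l using integral_distr[OF Zm, of "\<lambda>x. x"] by simp
  finally show ?thesis .
qed

theorem lemma4p4:
  fixes M :: "'a measure" and \<X> \<X>d :: "('a \<Rightarrow> real) set" and Z :: "'a \<Rightarrow> real"
  assumes "prob_space M"
    and "nonatomic M"
    and "admissible_space M \<X>"
    and "admissible_space M \<X>d"
    and "\<forall>X\<in>\<X>. \<forall>Y\<in>\<X>d. integrable M (\<lambda>\<omega>. X \<omega> * Y \<omega>)"
    and "Z \<in> \<X>"
    and "\<not> (\<exists>c. AE \<omega> in M. Z \<omega> = c)"
  shows "((\<integral>\<omega>. Z \<omega> \<partial>M) \<noteq> 0 \<longrightarrow>
            weak_top M \<X> \<X>d closure_of (fun_span (law_class M \<X> Z)) = \<X>)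
       \<and> ((\<integral>\<omega>. Z \<omega> \<partial>M) = 0 \<longrightarrow>
            weak_top M \<X> \<X>d closure_of (fun_span (law_class M \<X> Z))
              = {X\<in>\<X>. (\<integral>\<omega>. X \<omega> \<partial>M) = 0})"
proof -
  interpret prob_space M by fact
  note na = assms(2) and adm = assms(3) and admd = assms(4) and XY = assms(5) and Z = assms(6)
    and Znc = assms(7)
  have X0: "(\<lambda>_. 0) \<in> \<X>" and Xadd: "\<And>X W. X \<in> \<X> \<Longrightarrow> W \<in> \<X> \<Longrightarrow> (\<lambda>\<omega>. X \<omega> + W \<omega>) \<in> \<X>"
    and Xsc: "\<And>c X. X \<in> \<X> \<Longrightarrow> (\<lambda>\<omega>. c * X \<omega>) \<in> \<X>" and Xi: "\<And>X. X \<in> \<X> \<Longrightarrow> integrable M X"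
    using adm unfolding admissible_space_def fun_subspace_def by auto
  have Xd0: "(\<lambda>_. 0) \<in> \<X>d" and Xdadd: "\<And>X W. X \<in> \<X>d \<Longrightarrow> W \<in> \<X>d \<Longrightarrow> (\<lambda>\<omega>. X \<omega> + W \<omega>) \<in> \<X>d"
    and Xdsc: "\<And>c X. X \<in> \<X>d \<Longrightarrow> (\<lambda>\<omega>. c * X \<omega>) \<in> \<X>d" and Xdi: "\<And>X. X \<in> \<X>d \<Longrightarrow> integrable M X"
    and Xdb: "\<And>X. X \<in> borel_measurable M \<Longrightarrow> (\<exists>C. AE \<omega> in M. \<bar>X \<omega>\<bar> \<le> C) \<Longrightarrow> X \<in> \<X>d"
    using admd unfolding admissible_space_def fun_subspace_def by auto
  have XYi: "\<And>X Y. X \<in> \<X> \<Longrightarrow> Y \<in> \<X>d \<Longrightarrow> integrable M (\<lambda>\<omega>. X \<omega> * Y \<omega>)" using XY by auto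
  define \<phi> where "\<phi> Y X = (\<integral>\<omega>. X \<omega> * Y \<omega> \<partial>M)" for Y X :: "'a \<Rightarrow> real"
  have lin1: "\<phi> Y (\<lambda>\<omega>. X \<omega> + W \<omega>) = \<phi> Y X + \<phi> Y W" if "Y \<in> \<X>d" "X \<in> \<X>" "W \<in> \<X>" for Y X W
  proof -
    have "\<phi> Y (\<lambda>\<omega>. X \<omega> + W \<omega>) = (\<integral>\<omega>. X \<omega> * Y \<omega> + W \<omega> * Y \<omega> \<partial>M)"
      unfolding \<phi>_def by (simp add: distrib_right)
    also have "\<dots> = \<phi> Y X + \<phi> Y W" unfolding \<phi>_def
      by (rule Bochner_Integration.integral_add[OF XYi XYi]) (use that in auto)
    finally show ?thesis .
  qed
  have lin2: "\<phi> Y (\<lambda>\<omega>. c * X \<omega>) = c * \<phi> Y X" for Y X c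
    unfolding \<phi>_def by (simp add: mult.assoc)
  have lin3: "\<phi> (\<lambda>\<omega>. Y \<omega> - c * Y' \<omega>) X = \<phi> Y X - c * \<phi> Y' X"
    if "Y \<in> \<X>d" "Y' \<in> \<X>d" "X \<in> \<X>" for Y Y' X c
  proof -
    have "\<phi> (\<lambda>\<omega>. Y \<omega> - c * Y' \<omega>) X = (\<integral>\<omega>. X \<omega> * Y \<omega> - c * (X \<omega> * Y' \<omega>) \<partial>M)"
      unfolding \<phi>_def by (simp add: algebra_simps)
    also have "\<dots> = \<phi> Y X - c * \<phi> Y' X" unfolding \<phi>_def
      using XYi[OF that(3) that(1)] XYi[OF that(3) that(2)] by simp
    finally show ?thesis .
  qed
  have d3: "(\<lambda>\<omega>. Y \<omega> - c * Y' \<omega>) \<in> \<X>d" if "Y \<in> \<X>d" "Y' \<in> \<X>d" for Y Y' c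
  proof -
    have "(\<lambda>\<omega>. Y \<omega> + (- c) * Y' \<omega>) \<in> \<X>d" using Xdadd[OF that(1) Xdsc[OF that(2)]] .
    then show ?thesis by simp
  qed
  define LC where "LC = law_class M \<X> Z"
  define S where "S = fun_span LC"
  have LCX: "LC \<subseteq> \<X>" unfolding LC_def law_class_def by auto
  have ZLC: "Z \<in> LC" unfolding LC_def law_class_def using Z by auto
  have SX: "S \<subseteq> \<X>" unfolding S_def by (rule fun_span_sub[OF LCX X0]) (auto intro: Xadd Xsc)
  have S0: "(\<lambda>_. 0) \<in> S" unfolding S_def by (rule fun_span_zero)
  have Sadd: "\<And>X W. X \<in> S \<Longrightarrow> W \<in> S \<Longrightarrow> (\<lambda>\<omega>. X \<omega> + W \<omega>) \<in> S" unfolding S_def by (rule fun_span_add)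
  have Ssc: "\<And>c X. X \<in> S \<Longrightarrow> (\<lambda>\<omega>. c * X \<omega>) \<in> S" unfolding S_def by (rule fun_span_scale)
  have LCS: "LC \<subseteq> S" unfolding S_def using fun_span_base by blast
  have Kc: "\<exists>c. AE \<omega> in M. Y \<omega> = c" if Y: "Y \<in> \<X>d" and h: "\<forall>W\<in>S. \<phi> Y W = 0" for Y
  proof (rule ccontr)
    assume nc: "\<not> (\<exists>c. AE \<omega> in M. Y \<omega> = c)"
    have "\<forall>X\<in>\<X>. integrable M (\<lambda>\<omega>. X \<omega> * Y \<omega>)" using XYi Y by auto
    then obtain Z1 Z2 where z12: "Z1 \<in> law_class M \<X> Z" "Z2 \<in> law_class M \<X> Z"
      "(\<integral>\<omega>. Z1 \<omega> * Y \<omega> \<partial>M) \<noteq> (\<integral>\<omega>. Z2 \<omega> * Y \<omega> \<partial>M)"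
      using key[OF na adm Xdi[OF Y] _ Z Znc nc] by blast
    have "Z1 \<in> S" "Z2 \<in> S" using z12 LCS unfolding LC_def by auto
    then have "\<phi> Y Z1 = 0" "\<phi> Y Z2 = 0" using h by auto
    then show False using z12(3) unfolding \<phi>_def by simp
  qed
  have phc: "\<phi> Y X = c * integral\<^sup>L M X" if Y: "Y \<in> \<X>d" and X: "X \<in> \<X>" and ae: "AE \<omega> in M. Y \<omega> = c" for Y X c
  proof -
    have "\<phi> Y X = (\<integral>\<omega>. X \<omega> * c \<partial>M)" unfolding \<phi>_def
    proof (rule integral_cong_AE)
      show "(\<lambda>\<omega>. X \<omega> * Y \<omega>) \<in> borel_measurable M" using XYi[OF X Y] by auto
      show "(\<lambda>\<omega>. X \<omega> * c) \<in> borel_measurable M" using Xi[OF X] by auto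
      show "AE \<omega> in M. X \<omega> * Y \<omega> = X \<omega> * c" using ae by eventually_elim simp
    qed
    then show ?thesis by simp
  qed
  have dense: "G \<subseteq> weak_top M \<X> \<X>d closure_of S"
    if SG: "S \<subseteq> G" and GX: "G \<subseteq> \<X>"
      and Gadd: "\<And>X W. X \<in> G \<Longrightarrow> W \<in> G \<Longrightarrow> (\<lambda>\<omega>. X \<omega> + W \<omega>) \<in> G"
      and Gsc: "\<And>c X. X \<in> G \<Longrightarrow> (\<lambda>\<omega>. c * X \<omega>) \<in> G"
      and K: "\<And>Y. Y \<in> \<X>d \<Longrightarrow> (\<forall>W\<in>S. \<phi> Y W = 0) \<Longrightarrow> (\<forall>X\<in>G. \<phi> Y X = 0)" for G
  proof
    fix X assume XG: "X \<in> G"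
    have "X \<in> topspace (weak_top M \<X> \<X>d)" using topspace_weak[OF Xd0] XG GX by auto
    moreover have "\<exists>y\<in>S. y \<in> T" if T: "X \<in> T" "openin (weak_top M \<X> \<X>d) T" for T
    proof -
      obtain n :: nat and Ys e where e: "0 < e" "\<forall>i. Ys i \<in> \<X>d"
        "{W\<in>\<X>. \<forall>i<n. \<bar>(\<integral>\<omega>. W \<omega> * Ys i \<omega> \<partial>M) - (\<integral>\<omega>. X \<omega> * Ys i \<omega> \<partial>M)\<bar> < e} \<subseteq> T"
        using nbhd[OF Xd0 T(2)] T(1) by blast
      have "\<forall>X\<in>G. \<exists>W\<in>S. \<forall>i<n. \<phi> (Ys i) W = \<phi> (Ys i) X"
        by (rule interp[of "\<X>d" "\<X>" \<phi>, OF lin1 lin2 lin3 d3 _ SG GX S0 Sadd Ssc Gadd Gsc K])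
          (use e(2) in auto)
      then obtain W where W: "W \<in> S" "\<forall>i<n. \<phi> (Ys i) W = \<phi> (Ys i) X" using XG by blast
      have "W \<in> T" using e(1,3) W SX unfolding \<phi>_def by auto
      then show ?thesis using W by blast
    qed
    ultimately show "X \<in> weak_top M \<X> \<X>d closure_of S" unfolding closure_of_def by blast
  qed
  have clX: "weak_top M \<X> \<X>d closure_of S \<subseteq> \<X>"
    using topspace_weak[OF Xd0] unfolding closure_of_def by auto
  have part1: "weak_top M \<X> \<X>d closure_of S = \<X>" if nz: "integral\<^sup>L M Z \<noteq> 0"
  proof
    show "weak_top M \<X> \<X>d closure_of S \<subseteq> \<X>" by (rule clX)
    show "\<X> \<subseteq> weak_top M \<X> \<X>d closure_of S"
    proof (rule dense[OF SX order_refl Xadd Xsc])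
      fix Y assume Y: "Y \<in> \<X>d" and h: "\<forall>W\<in>S. \<phi> Y W = 0"
      obtain c where c: "AE \<omega> in M. Y \<omega> = c" using Kc[OF Y h] by blast
      have "\<phi> Y Z = 0" using h LCS ZLC by auto
      then have "c = 0" using phc[OF Y Z c] nz by simp
      then show "\<forall>X\<in>\<X>. \<phi> Y X = 0" using phc[OF Y _ c] by simp
    qed
  qed
  have part2: "weak_top M \<X> \<X>d closure_of S = {X\<in>\<X>. integral\<^sup>L M X = 0}" if z: "integral\<^sup>L M Z = 0"
  proof -
    define G where "G = {X\<in>\<X>. integral\<^sup>L M X = 0}"
    have LCG: "LC \<subseteq> G"
    proof
      fix Z' assume Z': "Z' \<in> LC"
      then have "Z' \<in> \<X>" "distr M borel Z' = distr M borel Z" unfolding LC_def law_class_def by auto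
      then have "integral\<^sup>L M Z' = integral\<^sup>L M Z"
        using int_eq_law Xi Z by (metis borel_measurable_integrable)
      then show "Z' \<in> G" using z \<open>Z' \<in> \<X>\<close> unfolding G_def by simp
    qed
    have Gadd: "(\<lambda>\<omega>. X \<omega> + W \<omega>) \<in> G" if "X \<in> G" "W \<in> G" for X W
      using that Xadd Xi unfolding G_def by (auto simp: Bochner_Integration.integral_add)
    have Gsc: "(\<lambda>\<omega>. c * X \<omega>) \<in> G" if "X \<in> G" for c X
      using that Xsc unfolding G_def by auto
    have G0: "(\<lambda>_. 0) \<in> G" using X0 unfolding G_def by simp
    have SG: "S \<subseteq> G" unfolding S_def by (rule fun_span_sub[OF LCG G0]) (auto intro: Gadd Gsc)
    have GX: "G \<subseteq> \<X>" unfolding G_def by auto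
    have sup: "G \<subseteq> weak_top M \<X> \<X>d closure_of S"
    proof (rule dense[OF SG GX Gadd Gsc])
      fix Y assume Y: "Y \<in> \<X>d" and h: "\<forall>W\<in>S. \<phi> Y W = 0"
      obtain c where c: "AE \<omega> in M. Y \<omega> = c" using Kc[OF Y h] by blast
      show "\<forall>X\<in>G. \<phi> Y X = 0" using phc[OF Y _ c] GX unfolding G_def by auto
    qed
    have sub: "weak_top M \<X> \<X>d closure_of S \<subseteq> G"
    proof
      fix X assume Xc: "X \<in> weak_top M \<X> \<X>d closure_of S"
      then have XX: "X \<in> \<X>" using clX by auto
      show "X \<in> G"
      proof (rule ccontr)
        assume "X \<notin> G"
        then have nz: "integral\<^sup>L M X \<noteq> 0" using XX unfolding G_def by auto
        define T where "T = {W\<in>\<X>. (\<integral>\<omega>. W \<omega> * (\<lambda>_. 1) \<omega> \<partial>M) \<in> - {0}}"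
        have one: "(\<lambda>_. 1::real) \<in> \<X>d" by (rule Xdb) auto
        have "openin (weak_top M \<X> \<X>d) T" unfolding weak_top_def openin_topology_generated_by_iff
          unfolding T_def
          by (rule generate_topology_on.Basis, intro CollectI exI[of _ "\<lambda>_. 1"] exI[of _ "- {0}"] conjI refl one)
            (simp add: open_Compl)
        moreover have "X \<in> T" using XX nz unfolding T_def by simp
        ultimately obtain y where y: "y \<in> S" "y \<in> T" using Xc unfolding closure_of_def by blast
        then have "y \<in> G" using SG by auto
        then show False using y(2) unfolding T_def G_def by simp
      qed
    qed
    show ?thesis using sup sub unfolding G_def by auto
  qed
  show ?thesis using part1 part2 unfolding S_def LC_def by blast
qed

end
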